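(* Let $A\in\mathrm{GL}_0(\mathcal S)$ with $A\circ A=\mathrm{id}$ and $A\notin\mathrm{Inv}(\mathcal S)$. Then the roots of $F$ can be numbered so that $A(\mathfrak p_3)=\mathfrak p_4$ and $A(\mathfrak p_5)=\mathfrak p_6$. Suppose the roots are so numbered and that moreover $\theta_3+\theta_4=\theta_5+\theta_6$ or $\theta_3\theta_4=\theta_5\theta_6$ (which can always be achieved by a translation $X\mapsto X+t$). Then: (a) if $A(\mathfrak p_1)=\mathfrak p_2$, then $\theta_1+\theta_2=\theta_3+\theta_4=\theta_5+\theta_6$ or $\theta_1\theta_2=\theta_3\theta_4=\theta_5\theta_6$; (b) otherwise $A$ fixes $\mathfrak p_1$ and $\mathfrak p_2$, and $\theta_1+\theta_2=0$ and $\theta_1^2=\theta_2^2=\theta_3\theta_4=\theta_5\theta_6$.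
   Context: Work over an algebraically closed field of characteristic $\neq2$. $F(X)=\sum_{i=0}^6f_iX^i$, $f_6\neq0$, distinct roots $\theta_1,\dots,\theta_6$. $P_j(X)=\prod_{i\ne j}(X-\theta_i)$, $\omega_j=P_j(\theta_j)$. Points of $\mathbb P^5$ are identified with $P(X)=\sum_{j=0}^5p_jX^j$; $\pi_j=P(\theta_j)/\omega_j$. $\mathcal S\subset\mathbb P^5$ is defined by $\sum_j\theta_j^i\omega_j\pi_j^2=0$, $i=0,1,2$. $\varepsilon^{(i)}$ is the involution $\pi_j\mapsto(-1)^{\delta_{ij}}\pi_j$ of $\mathcal S$; $\mathrm{Inv}(\mathcal S)$ is the commutative group of order 32 generated by them. $\Delta_0=\{(p_0:p_1:0:0:0:0)\}\subset\mathcal S$ and $\mathfrak p_i=(-\theta_i:1:0:0:0:0)\in\Delta_0$. $\mathrm{GL}(\mathcal S)$ is the group of automorphisms of $\mathcal S$ which are restrictions of projective linear transformations of $\mathbb P^5$, $\mathrm{GL}_0(\mathcal S)=\{A\in\mathrm{GL}(\mathcal S):A(\Delta_0)=\Delta_0\}$; each $A\in\mathrm{GL}_0(\mathcal S)$ permutes the set $\{\mathfrak p_1,\dots,\mathfrak p_6\}$. *)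

theory Defs
  imports "HOL-Computational_Algebra.Polynomial" "HOL-Combinatorics.Permutations"
begin

text \<open>Points of P^5 are represented by
  nonzero coefficient vectors p :: nat => 'a supported on {0..5}, taken up to a
  nonzero scalar; p corresponds to P(X) = sum_{k<6} p_k X^k.\<close>

definition Pj :: "(nat \<Rightarrow> 'a::field) \<Rightarrow> nat \<Rightarrow> 'a poly" where
  "Pj \<theta> j = (\<Prod>i\<in>{1..6} - {j}. [:- \<theta> i, 1:])"

definition omega :: "(nat \<Rightarrow> 'a::field) \<Rightarrow> nat \<Rightarrow> 'a" where
  "omega \<theta> j = poly (Pj \<theta> j) (\<theta> j)"

definition vec6 :: "(nat \<Rightarrow> 'a::field) set" where
  "vec6 = {p. \<forall>k\<ge>6. p k = 0}"

definition Ppoly :: "(nat \<Rightarrow> 'a::field) \<Rightarrow> 'a poly" where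
  "Ppoly p = (\<Sum>k<6. monom (p k) k)"

definition piC :: "(nat \<Rightarrow> 'a::field) \<Rightarrow> nat \<Rightarrow> (nat \<Rightarrow> 'a) \<Rightarrow> 'a" where
  "piC \<theta> j p = poly (Ppoly p) (\<theta> j) / omega \<theta> j"

definition Scone :: "(nat \<Rightarrow> 'a::field) \<Rightarrow> (nat \<Rightarrow> 'a) set" where
  "Scone \<theta> = {p \<in> vec6. p \<noteq> (\<lambda>_. 0) \<and>
     (\<forall>i<(3::nat). (\<Sum>j\<in>{1..6}. \<theta> j ^ i * omega \<theta> j * (piC \<theta> j p)\<^sup>2) = 0)}"

definition Delta0 :: "(nat \<Rightarrow> 'a::field) set" where
  "Delta0 = {p \<in> vec6. \<forall>k\<ge>2. p k = 0}"

definition ppt :: "(nat \<Rightarrow> 'a::field) \<Rightarrow> nat \<Rightarrow> nat \<Rightarrow> 'a" where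
  "ppt \<theta> i = (\<lambda>k. if k = 0 then - \<theta> i else if k = 1 then 1 else 0)"

definition peq :: "(nat \<Rightarrow> 'a::field) \<Rightarrow> (nat \<Rightarrow> 'a) \<Rightarrow> bool" where
  "peq p q \<longleftrightarrow> (\<exists>c. c \<noteq> 0 \<and> q = (\<lambda>k. c * p k))"

definition mapply :: "(nat \<Rightarrow> nat \<Rightarrow> 'a::field) \<Rightarrow> (nat \<Rightarrow> 'a) \<Rightarrow> nat \<Rightarrow> 'a" where
  "mapply M p = (\<lambda>i. if i < 6 then (\<Sum>k<6. M i k * p k) else 0)"

definition invertible6 :: "(nat \<Rightarrow> nat \<Rightarrow> 'a::field) \<Rightarrow> bool" where
  "invertible6 M \<longleftrightarrow> (\<exists>N. \<forall>i<6. \<forall>k<6.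
      (\<Sum>j<6. N i j * M j k) = (if i = k then 1 else 0))"

definition inGL :: "(nat \<Rightarrow> 'a::field) \<Rightarrow> (nat \<Rightarrow> nat \<Rightarrow> 'a) \<Rightarrow> bool" where
  "inGL \<theta> M \<longleftrightarrow> invertible6 M \<and> (\<forall>p\<in>vec6. p \<in> Scone \<theta> \<longleftrightarrow> mapply M p \<in> Scone \<theta>)"

definition inGL0 :: "(nat \<Rightarrow> 'a::field) \<Rightarrow> (nat \<Rightarrow> nat \<Rightarrow> 'a) \<Rightarrow> bool" where
  "inGL0 \<theta> M \<longleftrightarrow> inGL \<theta> M \<and> (\<forall>p\<in>vec6. p \<in> Delta0 \<longleftrightarrow> mapply M p \<in> Delta0)"

definition involutive_on_S :: "(nat \<Rightarrow> 'a::field) \<Rightarrow> (nat \<Rightarrow> nat \<Rightarrow> 'a) \<Rightarrow> bool" where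
  "involutive_on_S \<theta> M \<longleftrightarrow> (\<forall>p\<in>Scone \<theta>. peq p (mapply M (mapply M p)))"

text \<open>Inv(S): the group generated by the epsilon^(i), i.e. all sign changes
  pi_j -> s_j pi_j with s_j in {1,-1}. A (restricted to S) lies in Inv(S).\<close>
definition in_Inv :: "(nat \<Rightarrow> 'a::field) \<Rightarrow> (nat \<Rightarrow> nat \<Rightarrow> 'a) \<Rightarrow> bool" where
  "in_Inv \<theta> M \<longleftrightarrow> (\<exists>s. (\<forall>j\<in>{1..6}. s j = 1 \<or> s j = -1) \<and>
     (\<forall>p\<in>Scone \<theta>. \<exists>c. c \<noteq> 0 \<and>
        (\<forall>j\<in>{1..6}. piC \<theta> j (mapply M p) = c * s j * piC \<theta> j p)))"

end

theory Submission imports Defs begin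

abbreviation JJ :: "nat set" where "JJ \<equiv> {1..6}"

definition fm :: "(nat \<Rightarrow> 'a::field) \<Rightarrow> 'a poly" where
  "fm \<theta> = (\<Prod>i\<in>{1..6}. [:- \<theta> i, 1:])"

definition sigf :: "(nat \<Rightarrow> 'a::field) \<Rightarrow> ('a \<Rightarrow> 'a) \<Rightarrow> 'a" where
  "sigf \<theta> g = (\<Sum>j\<in>{1..6}. g (\<theta> j) / omega \<theta> j)"

lemma card_JJ: "card JJ = 6" by simp

lemma card_img: "inj_on \<theta> JJ \<Longrightarrow> card (\<theta> ` JJ) = 6"
  by (simp add: card_image)

lemma omega_nz:
  assumes "inj_on \<theta> JJ" "j \<in> JJ" shows "omega \<theta> j \<noteq> 0"
proof -
  have "omega \<theta> j = (\<Prod>i\<in>JJ - {j}. \<theta> j - \<theta> i)"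
    unfolding omega_def Pj_def by (simp add: poly_prod)
  moreover have "\<forall>i\<in>JJ - {j}. \<theta> j - \<theta> i \<noteq> 0"
    using assms by (auto dest: inj_onD)
  ultimately show ?thesis by simp
qed

lemma poly_Pj_other:
  assumes "k \<in> JJ" "k \<noteq> j" shows "poly (Pj \<theta> j) (\<theta> k) = 0"
proof -
  have "poly (Pj \<theta> j) (\<theta> k) = (\<Prod>i\<in>JJ - {j}. \<theta> k - \<theta> i)"
    unfolding Pj_def by (simp add: poly_prod)
  moreover have "k \<in> JJ - {j}" using assms by auto
  ultimately show ?thesis using \<open>k \<in> JJ - {j}\<close>
    by (metis (no_types, lifting) finite_Diff finite_atLeastAtMost prod_zero_iff right_minus_eq)
qed

lemma poly_Pj_self: "poly (Pj \<theta> j) (\<theta> j) = omega \<theta> j"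
  by (simp add: omega_def)

lemma degree_Pj: assumes "j \<in> JJ" shows "degree (Pj \<theta> j) = 5"
proof -
  have "degree (Pj \<theta> j) = (\<Sum>i\<in>JJ - {j}. degree [:- \<theta> i, 1:])"
    unfolding Pj_def by (rule degree_prod_sum_eq) auto
  also have "\<dots> = card (JJ - {j})" by simp
  also have "\<dots> = 5" using assms by simp
  finally show ?thesis .
qed

lemma lc_Pj: "lead_coeff (Pj \<theta> j) = 1"
  unfolding Pj_def by (simp add: lead_coeff_prod)

lemma coeff5_Pj: "j \<in> JJ \<Longrightarrow> coeff (Pj \<theta> j) 5 = 1"
  using lc_Pj[of \<theta> j] degree_Pj[of j \<theta>] by simp

lemma degree_Pj_le: "j \<in> JJ \<Longrightarrow> degree (Pj \<theta> j) \<le> 5"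
  using degree_Pj[of j \<theta>] by simp

lemma poly_eq_roots:
  fixes G H :: "'a::field poly"
  assumes inj: "inj_on \<theta> JJ" and "degree G \<le> 5" "degree H \<le> 5"
    and "\<And>j. j \<in> JJ \<Longrightarrow> poly G (\<theta> j) = poly H (\<theta> j)"
  shows "G = H"
proof (rule poly_eqI_degree[where A = "\<theta> ` JJ"])
  show "\<And>x. x \<in> \<theta> ` JJ \<Longrightarrow> poly G x = poly H x" using assms by auto
  show "degree G < card (\<theta> ` JJ)" using assms card_img[OF inj] by simp
  show "degree H < card (\<theta> ` JJ)" using assms card_img[OF inj] by simp
qed

definition interp :: "(nat \<Rightarrow> 'a::field) \<Rightarrow> (nat \<Rightarrow> 'a) \<Rightarrow> 'a poly" where
  "interp \<theta> y = (\<Sum>j\<in>JJ. smult (y j / omega \<theta> j) (Pj \<theta> j))"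

lemma degree_interp: "degree (interp \<theta> y) \<le> 5"
  unfolding interp_def
  by (rule degree_sum_le) (auto intro: order.trans[OF degree_smult_le] degree_Pj_le)

lemma poly_interp:
  assumes inj: "inj_on \<theta> JJ" and k: "k \<in> JJ"
  shows "poly (interp \<theta> y) (\<theta> k) = y k"
proof -
  have "poly (interp \<theta> y) (\<theta> k) = (\<Sum>j\<in>JJ. y j / omega \<theta> j * poly (Pj \<theta> j) (\<theta> k))"
    unfolding interp_def by (simp add: poly_sum)
  also have "\<dots> = y k / omega \<theta> k * poly (Pj \<theta> k) (\<theta> k)"
    by (subst sum.remove[OF _ k]) (use k poly_Pj_other[of _ _ \<theta>] in auto)
  also have "\<dots> = y k" using omega_nz[OF inj k] by (simp add: poly_Pj_self)
  finally show ?thesis .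
qed

lemma coeff5_interp:
  "coeff (interp \<theta> y) 5 = (\<Sum>j\<in>JJ. y j / omega \<theta> j)"
  unfolding interp_def by (simp add: coeff_sum coeff5_Pj)

lemma lagrange:
  assumes inj: "inj_on \<theta> JJ" and "degree G \<le> 5"
  shows "G = interp \<theta> (\<lambda>j. poly G (\<theta> j))"
  by (rule poly_eq_roots[OF inj]) (use assms degree_interp poly_interp[OF inj] in auto)

lemma sigf_poly:
  assumes inj: "inj_on \<theta> JJ" and "degree G \<le> 5"
  shows "sigf \<theta> (poly G) = coeff G 5"
proof -
  have "coeff G 5 = coeff (interp \<theta> (\<lambda>j. poly G (\<theta> j))) 5"
    using lagrange[OF assms] by simp
  thus ?thesis by (simp add: coeff5_interp sigf_def)
qed

lemma sigf_poly4:
  assumes inj: "inj_on \<theta> JJ" and "degree G \<le> 4"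
  shows "sigf \<theta> (poly G) = 0"
  using sigf_poly[OF inj, of G] assms by (simp add: coeff_eq_0)

lemma sigf_cong:
  assumes "\<And>j. j \<in> JJ \<Longrightarrow> g (\<theta> j) = h (\<theta> j)"
  shows "sigf \<theta> g = sigf \<theta> h"
  unfolding sigf_def using assms by (auto intro: sum.cong)

lemma sigf_add: "sigf \<theta> (\<lambda>x. g x + h x) = sigf \<theta> g + sigf \<theta> h"
  unfolding sigf_def by (simp add: sum.distrib add_divide_distrib)

lemma sigf_smult: "sigf \<theta> (\<lambda>x. c * g x) = c * sigf \<theta> g"
  unfolding sigf_def by (simp add: sum_distrib_left)

lemma sigf_diff: "sigf \<theta> (\<lambda>x. g x - h x) = sigf \<theta> g - sigf \<theta> h"
  unfolding sigf_def by (simp add: sum_subtractf diff_divide_distrib)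

lemma coeff_Ppoly: "coeff (Ppoly p) n = (if n < 6 then p n else 0)"
  unfolding Ppoly_def by (simp add: coeff_sum)

lemma degree_Ppoly: "degree (Ppoly p) \<le> 5"
  by (rule degree_le) (simp add: coeff_Ppoly)

lemma Ppoly_coeff: "degree G \<le> 5 \<Longrightarrow> Ppoly (\<lambda>k. coeff G k) = G"
  by (rule poly_eqI) (auto simp: coeff_Ppoly intro!: coeff_eq_0)

lemma vec6_coeff: "degree G \<le> 5 \<Longrightarrow> (\<lambda>k. coeff G k) \<in> vec6"
  by (auto simp: vec6_def intro!: coeff_eq_0)

lemma coeff_Ppoly_vec: "p \<in> vec6 \<Longrightarrow> (\<lambda>k. coeff (Ppoly p) k) = p"
  by (auto simp: vec6_def coeff_Ppoly)

lemma Ppoly_add: "Ppoly (\<lambda>k. p k + q k) = Ppoly p + Ppoly q"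
  by (rule poly_eqI) (simp add: coeff_Ppoly)

lemma Ppoly_smult: "Ppoly (\<lambda>k. c * p k) = smult c (Ppoly p)"
  by (rule poly_eqI) (simp add: coeff_Ppoly)

lemma Ppoly_zero_iff: "p \<in> vec6 \<Longrightarrow> Ppoly p = 0 \<longleftrightarrow> p = (\<lambda>_. 0)"
proof
  assume "p \<in> vec6" "Ppoly p = 0"
  then show "p = (\<lambda>_. 0)" using coeff_Ppoly_vec[of p] by simp
next
  assume "p = (\<lambda>_. 0)" then show "Ppoly p = 0" by (intro poly_eqI) (simp add: coeff_Ppoly)
qed

definition inS :: "(nat \<Rightarrow> 'a::field) \<Rightarrow> 'a poly \<Rightarrow> bool" where
  "inS \<theta> G \<longleftrightarrow> G \<noteq> 0 \<and> degree G \<le> 5 \<and> (\<forall>m<(3::nat). sigf \<theta> (\<lambda>x. x ^ m * (poly G x)\<^sup>2) = 0)"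

lemma Scone_iff:
  assumes inj: "inj_on \<theta> JJ"
  shows "p \<in> Scone \<theta> \<longleftrightarrow> p \<in> vec6 \<and> inS \<theta> (Ppoly p)"
proof -
  have trm: "\<theta> j ^ i * omega \<theta> j * (piC \<theta> j p)\<^sup>2
      = (\<theta> j ^ i * (poly (Ppoly p) (\<theta> j))\<^sup>2) / omega \<theta> j" if "j \<in> JJ" for i j p
  proof -
    have "omega \<theta> j \<noteq> 0" using omega_nz[OF inj that] .
    then show ?thesis unfolding piC_def by (simp add: power2_eq_square field_simps)
  qed
  have eq: "(\<Sum>j\<in>{1..6}. \<theta> j ^ i * omega \<theta> j * (piC \<theta> j p)\<^sup>2)
      = sigf \<theta> (\<lambda>x. x ^ i * (poly (Ppoly p) x)\<^sup>2)" for i p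
    unfolding sigf_def by (rule sum.cong) (simp_all add: trm)
  have "p \<in> vec6 \<Longrightarrow> p \<noteq> (\<lambda>_. 0) \<longleftrightarrow> Ppoly p \<noteq> 0" using Ppoly_zero_iff by blast
  then show ?thesis unfolding Scone_def inS_def eq using degree_Ppoly[of p] by auto
qed

lemma Delta0_iff: "p \<in> Delta0 \<longleftrightarrow> p \<in> vec6 \<and> degree (Ppoly p) \<le> 1"
proof
  assume "p \<in> Delta0" then show "p \<in> vec6 \<and> degree (Ppoly p) \<le> 1"
    unfolding Delta0_def by (auto intro!: degree_le simp: coeff_Ppoly)
next
  assume a: "p \<in> vec6 \<and> degree (Ppoly p) \<le> 1"
  have "p k = 0" if "k \<ge> 2" for k
  proof -
    have "coeff (Ppoly p) k = 0" using a that by (intro coeff_eq_0) auto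
    then show ?thesis using a that by (auto simp: coeff_Ppoly vec6_def split: if_splits)
  qed
  then show "p \<in> Delta0" using a unfolding Delta0_def by auto
qed

definition Tm :: "(nat \<Rightarrow> nat \<Rightarrow> 'a::field) \<Rightarrow> 'a poly \<Rightarrow> 'a poly" where
  "Tm M G = Ppoly (mapply M (\<lambda>k. coeff G k))"

lemma mapply_vec6: "mapply M p \<in> vec6"
  by (simp add: mapply_def vec6_def)

lemma Ppoly_mapply: "p \<in> vec6 \<Longrightarrow> Ppoly (mapply M p) = Tm M (Ppoly p)"
  by (simp add: Tm_def coeff_Ppoly_vec)

lemma mapply_add: "mapply M (\<lambda>k. p k + q k) = (\<lambda>i. mapply M p i + mapply M q i)"
  by (auto simp: mapply_def distrib_left sum.distrib)

lemma mapply_smult: "mapply M (\<lambda>k. c * p k) = (\<lambda>i. c * mapply M p i)"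
  by (auto simp: mapply_def sum_distrib_left ac_simps)

lemma Tm_add: "Tm M (G + H) = Tm M G + Tm M H"
  by (simp add: Tm_def mapply_add Ppoly_add)

lemma Tm_smult: "Tm M (smult c G) = smult c (Tm M G)"
  by (simp add: Tm_def mapply_smult Ppoly_smult)

lemma Tm_zero: "Tm M 0 = 0"
  using Tm_smult[of M 0 0] by simp

lemma Tm_diff: "Tm M (G - H) = Tm M G - Tm M H"
  using Tm_add[of M "G - H" H] by simp

lemma Tm_uminus: "Tm M (- G) = - Tm M G"
  using Tm_diff[of M 0 G] by (simp add: Tm_zero)

lemma Tm_sum: "Tm M (\<Sum>i\<in>A. f i) = (\<Sum>i\<in>A. Tm M (f i))"
  by (induction A rule: infinite_finite_induct) (auto simp: Tm_zero Tm_add)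

lemma degree_Tm: "degree (Tm M G) \<le> 5"
  by (simp add: Tm_def degree_Ppoly)

lemma peq_iff:
  assumes "p \<in> vec6" "q \<in> vec6"
  shows "peq p q \<longleftrightarrow> (\<exists>c. c \<noteq> 0 \<and> Ppoly q = smult c (Ppoly p))"
proof
  assume "peq p q" then show "\<exists>c. c \<noteq> 0 \<and> Ppoly q = smult c (Ppoly p)"
    unfolding peq_def by (auto simp: Ppoly_smult)
next
  assume "\<exists>c. c \<noteq> 0 \<and> Ppoly q = smult c (Ppoly p)"
  then obtain c where c: "c \<noteq> 0" "Ppoly q = smult c (Ppoly p)" by blast
  have "q = (\<lambda>k. coeff (Ppoly q) k)" using coeff_Ppoly_vec[OF assms(2)] by simp
  also have "\<dots> = (\<lambda>k. c * coeff (Ppoly p) k)" using c by simp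
  also have "\<dots> = (\<lambda>k. c * p k)" using coeff_Ppoly_vec[OF assms(1)] by metis
  finally show "peq p q" using c unfolding peq_def by blast
qed

lemma ppt_vec6: "ppt \<theta> i \<in> vec6"
  by (simp add: ppt_def vec6_def)

lemma coeff_lin: "coeff [:a, b:] n = (if n = 0 then a else if n = 1 then b else 0)"
  by (cases n) (auto simp: coeff_pCons split: nat.split)

lemma Ppoly_ppt: "Ppoly (ppt \<theta> i) = [:- \<theta> i, 1:]"
  by (rule poly_eqI) (simp only: coeff_Ppoly coeff_lin ppt_def, auto)

lemma invertible6_inj:
  assumes "invertible6 M" "p \<in> vec6" "mapply M p = (\<lambda>_. 0)"
  shows "p = (\<lambda>_. 0)"
proof
  fix k
  obtain N where N: "\<forall>i<6. \<forall>k<6. (\<Sum>j<6. N i j * M j k) = (if i = k then 1 else 0)"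
    using assms(1) unfolding invertible6_def by blast
  show "p k = 0"
  proof (cases "k < 6")
    case True
    have "p k = (\<Sum>l<6. (if k = l then 1 else 0) * p l)" using True
    proof -
      have "(\<Sum>l<6. (if k = l then 1 else 0) * p l) = (\<Sum>l<6. (if k = l then p l else 0))"
        by (rule sum.cong) auto
      then show ?thesis using True by simp
    qed
    also have "\<dots> = (\<Sum>l<6. (\<Sum>j<6. N k j * M j l) * p l)"
      using N True by (intro sum.cong) auto
    also have "\<dots> = (\<Sum>j<6. N k j * (\<Sum>l<6. M j l * p l))"
      by (simp add: sum_distrib_left sum_distrib_right mult.assoc) (rule sum.swap)
    also have "\<dots> = (\<Sum>j<6. N k j * mapply M p j)"
      by (intro sum.cong) (auto simp: mapply_def)
    also have "\<dots> = 0" using assms(3) by simp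
    finally show ?thesis .
  next
    case False then show ?thesis using assms(2) by (simp add: vec6_def)
  qed
qed

lemma Tm_inj:
  assumes "invertible6 M" "degree G \<le> 5" "Tm M G = 0"
  shows "G = 0"
proof -
  have "mapply M (\<lambda>k. coeff G k) = (\<lambda>_. 0)"
    using assms(3) Ppoly_zero_iff[OF mapply_vec6] unfolding Tm_def by blast
  then have "(\<lambda>k. coeff G k) = (\<lambda>_. 0)"
    using invertible6_inj[OF assms(1) vec6_coeff[OF assms(2)]] by blast
  then show ?thesis by (metis Ppoly_coeff Ppoly_zero_iff assms(2) vec6_coeff)
qed


lemma deg1_two_roots:
  fixes Z :: "'a::field poly"
  assumes "degree Z \<le> 1" "poly Z a = 0" "poly Z b = 0" "a \<noteq> b"
  shows "Z = 0"
  by (rule poly_eqI_degree[where A = "{a, b}"]) (use assms in auto)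

lemma deg_drop:
  fixes G :: "'a::field poly"
  assumes "degree G \<le> Suc n" "coeff G (Suc n) = 0" shows "degree G \<le> n"
proof (cases "degree G = Suc n")
  case True
  then have "G = 0" using assms(2) by (metis leading_coeff_0_iff)
  then show ?thesis using True by simp
qed (use assms in auto)

lemma deg2_lemma:
  fixes G :: "'a::field poly"
  assumes inj: "inj_on \<theta> JJ" and dG: "degree G \<le> 5"
    and h: "\<And>m. m < 3 \<Longrightarrow> sigf \<theta> (\<lambda>x. x ^ m * poly G x) = 0"
  shows "degree G \<le> 2"
proof -
  have "sigf \<theta> (poly G) = 0" using h[of 0] by simp
  then have c5: "coeff G 5 = 0" using sigf_poly[OF inj dG] by simp
  have s5: "Suc 4 = (5::nat)" by simp
  have d4: "degree G \<le> 4" using deg_drop[of G 4, unfolded s5] dG c5 by blast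
  have p1: "sigf \<theta> (\<lambda>x. x ^ 1 * poly G x) = sigf \<theta> (poly (pCons 0 G))"
    by (rule arg_cong[where f="sigf \<theta>"]) auto
  have dp1: "degree (pCons 0 G) \<le> 5" using d4 by (simp add: degree_pCons_eq_if)
  have "coeff (pCons 0 G) 5 = 0" using h[of 1] sigf_poly[OF inj dp1] p1 by simp
  then have c4: "coeff G 4 = 0" by (simp add: numeral_eq_Suc)
  have s4: "Suc 3 = (4::nat)" by simp
  have d3: "degree G \<le> 3" using deg_drop[of G 3, unfolded s4] d4 c4 by blast
  have p2: "sigf \<theta> (\<lambda>x. x ^ 2 * poly G x) = sigf \<theta> (poly (pCons 0 (pCons 0 G)))"
    by (rule arg_cong[where f="sigf \<theta>"]) (auto simp: power2_eq_square)
  have dp2: "degree (pCons 0 (pCons 0 G)) \<le> 5" using d3 by (simp add: degree_pCons_eq_if)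
  have "coeff (pCons 0 (pCons 0 G)) 5 = 0" using h[of 2] sigf_poly[OF inj dp2] p2 by simp
  then have c3: "coeff G 3 = 0" by (simp add: numeral_eq_Suc)
  have s3: "Suc 2 = (3::nat)" by simp
  show "degree G \<le> 2" using deg_drop[of G 2, unfolded s3] d3 c3 by blast
qed

lemma fm_nz: "fm \<theta> \<noteq> 0"
  unfolding fm_def by (auto simp: prod_zero_iff)

lemma degree_fm: "degree (fm \<theta>) = 6"
  unfolding fm_def by (subst degree_prod_sum_eq) auto

lemma lc_fm: "lead_coeff (fm \<theta>) = 1"
  unfolding fm_def by (simp add: lead_coeff_prod)

lemma poly_fm_root: "j \<in> JJ \<Longrightarrow> poly (fm \<theta>) (\<theta> j) = 0"
  unfolding fm_def by (auto simp: poly_prod prod_zero_iff)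

lemma poly_fm_nz:
  assumes "\<And>j. j \<in> JJ \<Longrightarrow> \<theta> j \<noteq> r" shows "poly (fm \<theta>) r \<noteq> 0"
proof -
  have "poly (fm \<theta>) r = (\<Prod>i\<in>JJ. r - \<theta> i)" unfolding fm_def by (simp add: poly_prod)
  moreover have "\<forall>i\<in>JJ. r - \<theta> i \<noteq> 0" using assms by force
  ultimately show ?thesis by simp
qed

lemma degree_mod_fm: "degree (A mod fm \<theta>) \<le> 5"
  using degree_mod_less[OF fm_nz, of A \<theta>] degree_fm[of \<theta>] by auto

lemma poly_mod_fm: "j \<in> JJ \<Longrightarrow> poly (A mod fm \<theta>) (\<theta> j) = poly A (\<theta> j)"
  by (rule poly_mod) (rule poly_fm_root)

lemma sigf_recip:
  assumes inj: "inj_on \<theta> JJ" and r: "\<And>j. j \<in> JJ \<Longrightarrow> \<theta> j \<noteq> r"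
  shows "sigf \<theta> (\<lambda>x. 1 / (x - r)) = - 1 / poly (fm \<theta>) r"
proof -
  define H2 where "H2 = synthetic_div (fm \<theta>) r"
  have fr: "poly (fm \<theta>) r \<noteq> 0" using poly_fm_nz r by blast
  have dH2: "degree H2 = 5" unfolding H2_def by (simp add: degree_synthetic_div degree_fm)
  have corr: "fm \<theta> + smult r H2 = pCons (poly (fm \<theta>) r) H2"
    unfolding H2_def by (rule synthetic_div_correct)
  have "coeff (fm \<theta> + smult r H2) 6 = coeff (pCons (poly (fm \<theta>) r) H2) 6" using corr by simp
  moreover have "coeff (fm \<theta>) 6 = 1" using lc_fm[of \<theta>] degree_fm[of \<theta>] by simp
  moreover have "coeff H2 6 = 0" using dH2 by (simp add: coeff_eq_0)
  ultimately have c5: "coeff H2 5 = 1" by (simp add: numeral_eq_Suc)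
  have val: "1 / (\<theta> j - r) = - poly H2 (\<theta> j) / poly (fm \<theta>) r" if "j \<in> JJ" for j
  proof -
    have "poly (fm \<theta> + smult r H2) (\<theta> j) = poly (pCons (poly (fm \<theta>) r) H2) (\<theta> j)"
      using corr by simp
    then have "r * poly H2 (\<theta> j) = poly (fm \<theta>) r + \<theta> j * poly H2 (\<theta> j)"
      using poly_fm_root[where \<theta>=\<theta>, OF that] by simp
    moreover have "\<theta> j - r \<noteq> 0" using r that by auto
    ultimately show ?thesis using fr by (simp add: field_simps)
  qed
  have "sigf \<theta> (\<lambda>x. 1 / (x - r)) = sigf \<theta> (\<lambda>x. (- 1 / poly (fm \<theta>) r) * poly H2 x)"
    by (rule sigf_cong) (simp add: val)
  also have "\<dots> = (- 1 / poly (fm \<theta>) r) * coeff H2 5"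
    by (subst sigf_smult, subst sigf_poly[OF inj], simp_all add: dH2)
  finally show ?thesis using c5 by simp
qed

lemma GL_lemma:
  fixes Y :: "'a::field poly"
  assumes inj: "inj_on \<theta> JJ"
    and Lnz: "\<And>j. j \<in> JJ \<Longrightarrow> v0 + v1 * \<theta> j \<noteq> 0"
    and dY: "degree Y \<le> 5"
    and lin: "\<And>m. m < 3 \<Longrightarrow> sigf \<theta> (\<lambda>x. x ^ m * (v0 + v1 * x) * poly Y x) = 0"
    and q0: "sigf \<theta> (\<lambda>x. (poly Y x)\<^sup>2) = 0"
    and q1: "sigf \<theta> (\<lambda>x. x * (poly Y x)\<^sup>2) = 0"
  shows "degree Y \<le> 1"
proof -
  define L where "L = [:v0, v1:]"
  have pL: "poly L x = v0 + v1 * x" for x by (simp add: L_def)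
  define G where "G = (L * Y) mod fm \<theta>"
  have dG5: "degree G \<le> 5" unfolding G_def by (rule degree_mod_fm)
  have pG: "poly G (\<theta> j) = (v0 + v1 * \<theta> j) * poly Y (\<theta> j)" if "j \<in> JJ" for j
    unfolding G_def using poly_mod_fm[where \<theta>=\<theta>, OF that] by (simp add: pL)
  have "sigf \<theta> (\<lambda>x. x ^ m * poly G x) = 0" if "m < 3" for m
    using lin[OF that] by (subst sigf_cong[where h = "\<lambda>x. x ^ m * (v0 + v1 * x) * poly Y x"])
       (auto simp: pG)
  then have dG: "degree G \<le> 2" using deg2_lemma[OF inj dG5] by blast
  have pY: "poly Y (\<theta> j) = poly G (\<theta> j) / (v0 + v1 * \<theta> j)" if "j \<in> JJ" for j
    using pG[OF that] Lnz[OF that] by (simp add: field_simps)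
  show ?thesis
  proof (cases "v1 = 0")
    case True
    have v0: "v0 \<noteq> 0" using Lnz[of 1] True by simp
    have dG1: "degree G \<le> 1"
    proof (rule ccontr)
      assume "\<not> degree G \<le> 1"
      then have d2: "degree G = 2" using dG by simp
      have "sigf \<theta> (\<lambda>x. x * (poly Y x)\<^sup>2) = sigf \<theta> (\<lambda>x. (1 / v0\<^sup>2) * poly (pCons 0 (G * G)) x)"
        by (rule sigf_cong) (use pY True in \<open>auto simp: power2_eq_square\<close>)
      also have "\<dots> = (1 / v0\<^sup>2) * coeff (pCons 0 (G * G)) 5"
      proof -
        have "degree (G * G) \<le> 4" using degree_mult_le[of G G] d2 by simp
        then have dd: "degree (pCons 0 (G * G)) \<le> 5" by (cases "G * G = 0") auto
        show ?thesis by (subst sigf_smult, subst sigf_poly[OF inj dd], rule refl)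
      qed
      also have "coeff (pCons 0 (G * G)) 5 = coeff (G * G) 4" by (simp add: numeral_eq_Suc)
      also have "coeff (G * G) 4 = lead_coeff G * lead_coeff G"
        using coeff_mult_degree_sum[of G G] d2 by simp
      finally have "lead_coeff G * lead_coeff G = 0" using q1 v0 by simp
      moreover have "G \<noteq> 0" using d2 by auto
      ultimately show False by simp
    qed
    have "Y = smult (1 / v0) G"
      by (rule poly_eq_roots[OF inj dY]) (use dG5 pY True in auto)
    then show ?thesis using dG1 by simp
  next
    case False
    define r where "r = - v0 / v1"
    have Lr: "v0 + v1 * x = v1 * (x - r)" for x using False by (simp add: r_def field_simps)
    have rne: "\<theta> j \<noteq> r" if "j \<in> JJ" for j using Lnz[OF that] by (simp add: Lr)
    define K where "K = synthetic_div (G * G) r"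
    have corrK: "[:-r, 1:] * K + [:poly (G * G) r:] = G * G"
      unfolding K_def by (rule synthetic_div_correct')
    have dK: "degree K \<le> 3" unfolding K_def
      using degree_mult_le[of G G] dG by (simp add: degree_synthetic_div)
    have "0 = v1 * sigf \<theta> (\<lambda>x. x * (poly Y x)\<^sup>2) + v0 * sigf \<theta> (\<lambda>x. (poly Y x)\<^sup>2)"
      using q0 q1 by simp
    also have "\<dots> = sigf \<theta> (\<lambda>x. (v0 + v1 * x) * (poly Y x)\<^sup>2)"
      by (simp add: sigf_smult[symmetric] sigf_add[symmetric] algebra_simps)
    also have "\<dots> = sigf \<theta> (\<lambda>x. ((poly G r)\<^sup>2 / v1) * (1 / (x - r)) + (1 / v1) * poly K x)"
    proof (rule sigf_cong)
      fix j assume j: "j \<in> JJ"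
      have ne: "\<theta> j - r \<noteq> 0" using rne[OF j] by simp
      have "poly (G * G) (\<theta> j) = (\<theta> j - r) * poly K (\<theta> j) + poly (G * G) r"
        using arg_cong[OF corrK, of "\<lambda>p. poly p (\<theta> j)"] by (simp add: algebra_simps)
      then have e: "(poly G (\<theta> j))\<^sup>2 = (\<theta> j - r) * poly K (\<theta> j) + (poly G r)\<^sup>2"
        by (simp only: power2_eq_square poly_mult)
      have "(v0 + v1 * \<theta> j) * (poly Y (\<theta> j))\<^sup>2 = (poly G (\<theta> j))\<^sup>2 / (v1 * (\<theta> j - r))"
        using pY[OF j] Lnz[OF j] by (simp add: Lr power2_eq_square field_simps)
      also have "\<dots> = ((poly G r)\<^sup>2 / v1) * (1 / (\<theta> j - r)) + (1 / v1) * poly K (\<theta> j)"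
        unfolding e using ne False by (simp add: field_simps)
      finally show "(v0 + v1 * \<theta> j) * (poly Y (\<theta> j))\<^sup>2 =
          ((poly G r)\<^sup>2 / v1) * (1 / (\<theta> j - r)) + (1 / v1) * poly K (\<theta> j)" .
    qed
    also have "\<dots> = ((poly G r)\<^sup>2 / v1) * sigf \<theta> (\<lambda>x. 1 / (x - r)) + (1 / v1) * sigf \<theta> (poly K)"
      by (simp only: sigf_add sigf_smult)
    also have "\<dots> = ((poly G r)\<^sup>2 / v1) * (- 1 / poly (fm \<theta>) r)"
      using sigf_recip[OF inj rne] sigf_poly4[OF inj, of K] dK by simp
    finally have "poly G r = 0" using False poly_fm_nz[of \<theta> r] rne by auto
    define G1 where "G1 = synthetic_div G r"
    have corrG: "[:-r, 1:] * G1 + [:poly G r:] = G" unfolding G1_def by (rule synthetic_div_correct')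
    have dG1: "degree G1 \<le> 1" unfolding G1_def using dG by (simp add: degree_synthetic_div)
    have "Y = smult (1 / v1) G1"
    proof (rule poly_eq_roots[OF inj dY])
      show "degree (smult (1 / v1) G1) \<le> 5" using dG1 by simp
      fix j assume j: "j \<in> JJ"
      have "poly G (\<theta> j) = (\<theta> j - r) * poly G1 (\<theta> j)"
        using arg_cong[OF corrG, of "\<lambda>p. poly p (\<theta> j)"] \<open>poly G r = 0\<close> by (simp add: algebra_simps)
      then have "poly Y (\<theta> j) = (\<theta> j - r) * poly G1 (\<theta> j) / (v1 * (\<theta> j - r))"
        using pY[OF j] by (simp add: Lr)
      moreover have "\<theta> j - r \<noteq> 0" using rne[OF j] by simp
      ultimately show "poly Y (\<theta> j) = poly (smult (1 / v1) G1) (\<theta> j)"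
        using False by simp
    qed
    then show ?thesis using dG1 by simp
  qed
qed

lemma sol_space:
  fixes Y :: "'a::field poly"
  assumes inj: "inj_on \<theta> JJ" and i: "i \<in> JJ" and dY: "degree Y \<le> 5"
    and lin: "\<And>m. m < 3 \<Longrightarrow> sigf \<theta> (\<lambda>x. x ^ m * (x - \<theta> i) * poly Y x) = 0"
  shows "\<exists>Z d. degree Z \<le> 1 \<and> Y = Z + smult d (Pj \<theta> i)"
proof -
  define L where "L = [:- \<theta> i, 1:]"
  define G where "G = (L * Y) mod fm \<theta>"
  have dG5: "degree G \<le> 5" unfolding G_def by (rule degree_mod_fm)
  have pG: "poly G (\<theta> j) = (\<theta> j - \<theta> i) * poly Y (\<theta> j)" if "j \<in> JJ" for j
    unfolding G_def using poly_mod_fm[where \<theta>=\<theta>, OF that] by (simp add: L_def algebra_simps)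
  have "sigf \<theta> (\<lambda>x. x ^ m * poly G x) = 0" if "m < 3" for m
    using lin[OF that] by (subst sigf_cong[where h = "\<lambda>x. x ^ m * (x - \<theta> i) * poly Y x"])
       (auto simp: pG)
  then have dG: "degree G \<le> 2" using deg2_lemma[OF inj dG5] by blast
  have Gi: "poly G (\<theta> i) = 0" using pG[OF i] by simp
  define G1 where "G1 = synthetic_div G (\<theta> i)"
  have corrG: "[:- \<theta> i, 1:] * G1 + [:poly G (\<theta> i):] = G" unfolding G1_def by (rule synthetic_div_correct')
  have dG1: "degree G1 \<le> 1" unfolding G1_def using dG by (simp add: degree_synthetic_div)
  have om: "omega \<theta> i \<noteq> 0" using omega_nz[OF inj i] .
  define d where "d = (poly Y (\<theta> i) - poly G1 (\<theta> i)) / omega \<theta> i"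
  have "Y = G1 + smult d (Pj \<theta> i)"
  proof (rule poly_eq_roots[OF inj dY])
    show "degree (G1 + smult d (Pj \<theta> i)) \<le> 5"
      using dG1 degree_Pj_le[OF i, of \<theta>] by (intro degree_add_le) auto
    fix j assume j: "j \<in> JJ"
    show "poly Y (\<theta> j) = poly (G1 + smult d (Pj \<theta> i)) (\<theta> j)"
    proof (cases "j = i")
      case True then show ?thesis using om by (simp add: d_def poly_Pj_self)
    next
      case False
      have "poly G (\<theta> j) = (\<theta> j - \<theta> i) * poly G1 (\<theta> j)"
        using arg_cong[OF corrG, of "\<lambda>p. poly p (\<theta> j)"] Gi by (simp add: algebra_simps)
      moreover have "\<theta> j \<noteq> \<theta> i" using inj i j False by (auto dest: inj_onD)
      ultimately show ?thesis using pG[OF j] poly_Pj_other[where \<theta>=\<theta>, OF j False] by simp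
    qed
  qed
  then show ?thesis using dG1 by blast
qed


lemma deg1_eq: "degree (U :: 'a::field poly) \<le> 1 \<Longrightarrow> U = [:coeff U 0, coeff U 1:]"
  by (rule poly_eqI) (auto simp: coeff_lin intro: coeff_eq_0)

lemma sigf_deg4:
  assumes inj: "inj_on \<theta> JJ" and "degree (P :: 'a::field poly) \<le> 4" and "\<And>x. g x = poly P x"
  shows "sigf \<theta> g = 0"
proof -
  have "g = poly P" using assms(3) by auto
  then show ?thesis using sigf_poly4[OF inj assms(2)] by simp
qed

lemma sigf_xm_deg1:
  assumes inj: "inj_on \<theta> JJ" and "degree (U :: 'a::field poly) \<le> 1" "degree V \<le> 1" "m < 3"
  shows "sigf \<theta> (\<lambda>x. x ^ m * poly U x * poly V x) = 0"
proof (rule sigf_deg4[OF inj, where P = "monom 1 m * U * V"])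
  have "degree (monom 1 m * U * V) \<le> degree (monom (1::'a) m) + degree U + degree V"
    by (meson add_le_mono degree_mult_le order.trans order_refl)
  also have "\<dots> \<le> 4" using assms degree_monom_le[of "1::'a" m] by linarith
  finally show "degree (monom 1 m * U * V) \<le> 4" .
  show "\<And>x. x ^ m * poly U x * poly V x = poly (monom 1 m * U * V) x"
    by (simp add: poly_monom)
qed

lemma inS_of_vals:
  assumes inj: "inj_on \<theta> JJ" and dV: "degree V \<le> 5" and V0: "V \<noteq> 0"
    and dU: "degree (U :: 'a::field poly) \<le> 1"
    and vals: "\<And>j. j \<in> JJ \<Longrightarrow> (poly V (\<theta> j))\<^sup>2 = (poly U (\<theta> j))\<^sup>2"
  shows "inS \<theta> V"
  unfolding inS_def
proof (intro conjI allI impI V0 dV)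
  fix m :: nat assume m: "m < 3"
  have "sigf \<theta> (\<lambda>x. x ^ m * (poly V x)\<^sup>2) = sigf \<theta> (\<lambda>x. x ^ m * poly U x * poly U x)"
    by (rule sigf_cong) (simp add: vals power2_eq_square[symmetric])
  also have "\<dots> = 0" by (rule sigf_xm_deg1[OF inj dU dU m])
  finally show "sigf \<theta> (\<lambda>x. x ^ m * (poly V x)\<^sup>2) = 0" .
qed

lemma inS_sig: "inS \<theta> G \<Longrightarrow> m < 3 \<Longrightarrow> sigf \<theta> (\<lambda>x. x ^ m * (poly G x)\<^sup>2) = 0"
  unfolding inS_def by blast

lemma inS_deg1:
  assumes inj: "inj_on \<theta> JJ" and "degree (U :: 'a::field poly) \<le> 1" "U \<noteq> 0"
  shows "inS \<theta> U"
  by (rule inS_of_vals[OF inj _ assms(3) assms(2)]) (use assms in auto)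

lemma sigf_Pj:
  assumes inj: "inj_on \<theta> JJ" and k: "k \<in> JJ"
  shows "sigf \<theta> (\<lambda>x. g x * poly (Pj \<theta> k) x) = g (\<theta> k)"
proof -
  have "sigf \<theta> (\<lambda>x. g x * poly (Pj \<theta> k) x) = g (\<theta> k) * poly (Pj \<theta> k) (\<theta> k) / omega \<theta> k"
    unfolding sigf_def
    by (subst sum.remove[OF _ k]) (use k poly_Pj_other[of _ _ \<theta>] in auto)
  then show ?thesis using omega_nz[OF inj k] by (simp add: poly_Pj_self)
qed

definition Rel :: "(nat \<Rightarrow> nat \<Rightarrow> 'a::field) \<Rightarrow> 'a \<Rightarrow> 'a \<Rightarrow> bool" where
  "Rel M x y \<longleftrightarrow> (\<exists>c. c \<noteq> 0 \<and> [:- y, 1:] = smult c (Tm M [:- x, 1:]))"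

lemma Rel_peq: "peq (mapply M (ppt \<theta> i)) (ppt \<theta> k) \<longleftrightarrow> Rel M (\<theta> i) (\<theta> k)"
  unfolding Rel_def
  by (simp add: peq_iff[OF mapply_vec6 ppt_vec6] Ppoly_mapply[OF ppt_vec6] Ppoly_ppt)

lemma Rel_root: "Rel M x y \<Longrightarrow> poly (Tm M [:- x, 1:]) y = 0"
  unfolding Rel_def by (auto dest: arg_cong[where f = "\<lambda>p. poly p y"])

lemma Rel_unique: "Rel M x y \<Longrightarrow> Rel M x y' \<Longrightarrow> y = y'"
proof -
  assume a: "Rel M x y" "Rel M x y'"
  then obtain c where c: "c \<noteq> 0" "[:- y, 1:] = smult c (Tm M [:- x, 1:])" unfolding Rel_def by blast
  have "poly (Tm M [:- x, 1:]) y' = 0" using Rel_root[OF a(2)] .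
  then have "poly [:- y, 1:] y' = 0" using c by simp
  then show "y = y'" by simp
qed

lemma alg1:
  fixes a l X Y :: "'a::field"
  assumes "a \<noteq> 0" "0 = l * l * 0 + ((- 2 * l * a) * X + (a * a) * Y)"
  shows "a * Y = 2 * (l * X)"
proof -
  have "a * (a * Y - 2 * (l * X)) = 0" using assms(2) by algebra
  then have "a * Y - 2 * (l * X) = 0" using assms(1) by (simp only: mult_eq_0_iff) blast
  then show ?thesis by simp
qed

lemma alg2:
  fixes u w l X Y :: "'a::field"
  assumes "(2::'a) \<noteq> 0" "w \<noteq> 0" "(2 * u / w) * Y = 2 * (l * X)"
  shows "l * X = (u / w) * Y"
  using assms by (simp add: field_simps)

lemma alg3:
  fixes wi wk l Xi Xk Yi Yk W :: "'a::field"
  assumes two: "(2::'a) \<noteq> 0" and wi: "wi \<noteq> 0" and wk: "wk \<noteq> 0"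
    and hi: "l * Xi = (1 / wi) * Yi" and hk: "l * Xk = (1 / wk) * Yk"
    and e: "0 = l * l * 0 + ((- 2 * l * (2 / wi)) * Xi + ((- 2 * l * (2 / wk)) * Xk
        + (((2 / wi) * (2 / wi)) * Yi + (((2 / wk) * (2 / wk)) * Yk + (2 * (2 / wi) * (2 / wk)) * W))))"
  shows "W = 0"
proof -
  have "(- 2 * l * (2 / wi)) * Xi = - ((2 / wi) * (2 / wi)) * Yi"
  proof -
    have "(- 2 * l * (2 / wi)) * Xi = - 2 * (2 / wi) * (l * Xi)" by (simp add: algebra_simps)
    also have "\<dots> = - ((2 / wi) * (2 / wi)) * Yi" using hi by (simp add: field_simps)
    finally show ?thesis .
  qed
  moreover have "(- 2 * l * (2 / wk)) * Xk = - ((2 / wk) * (2 / wk)) * Yk"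
  proof -
    have "(- 2 * l * (2 / wk)) * Xk = - 2 * (2 / wk) * (l * Xk)" by (simp add: algebra_simps)
    also have "\<dots> = - ((2 / wk) * (2 / wk)) * Yk" using hk by (simp add: field_simps)
    finally show ?thesis .
  qed
  ultimately have h: "(2 * (2 / wi) * (2 / wk)) * W = 0" using e by (simp add: algebra_simps)
  have nz: "2 * (2 / wi) * (2 / wk) \<noteq> 0" by (metis divide_eq_0_iff mult_eq_0_iff two wi wk)
  show ?thesis using h nz by (metis mult_eq_0_iff)
qed

lemma part2_alg:
  fixes t :: "nat \<Rightarrow> 'a::field"
  assumes inj: "inj_on t JJ" and two: "(2::'a) \<noteq> 0"
    and A: "a0 \<noteq> 0 \<or> a1 \<noteq> 0"
    and E: "\<And>x y. E x y \<longleftrightarrow> b0 - a0 * (x + y) - a1 * (x * y) = 0"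
    and E34: "E (t 3) (t 4)" and E56: "E (t 5) (t 6)"
    and sp: "t 3 + t 4 = t 5 + t 6 \<or> t 3 * t 4 = t 5 * t 6"
  shows "E (t 1) (t 2) \<longrightarrow> (t 1 + t 2 = t 3 + t 4 \<and> t 3 + t 4 = t 5 + t 6) \<or>
            (t 1 * t 2 = t 3 * t 4 \<and> t 3 * t 4 = t 5 * t 6)"
    and "E (t 1) (t 1) \<and> E (t 2) (t 2) \<longrightarrow> t 1 + t 2 = 0 \<and> t 1 ^ 2 = t 2 ^ 2 \<and>
            t 2 ^ 2 = t 3 * t 4 \<and> t 3 * t 4 = t 5 * t 6"
    and "\<forall>x k. k \<in> {3, 4, 5, 6} \<and> E x (t k) \<longrightarrow> x \<noteq> t 1 \<and> x \<noteq> t 2"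
proof -
  have d: "t i \<noteq> t j" if "i \<in> JJ" "j \<in> JJ" "i \<noteq> j" for i j
    using inj that by (auto dest: inj_onD)
  have Esym: "E x y \<longleftrightarrow> E y x" for x y unfolding E by (simp add: algebra_simps)
  have notboth: "\<not> (t 3 + t 4 = t 5 + t 6 \<and> t 3 * t 4 = t 5 * t 6)"
  proof
    assume h: "t 3 + t 4 = t 5 + t 6 \<and> t 3 * t 4 = t 5 * t 6"
    have "(t 5 - t 3) * (t 5 - t 4) = 0"
    proof -
      have "(t 5 - t 3) * (t 5 - t 4) = t 5 * t 5 - t 5 * (t 3 + t 4) + t 3 * t 4" by (simp add: algebra_simps)
      also have "\<dots> = t 5 * t 5 - t 5 * (t 5 + t 6) + t 5 * t 6" using h by simp
      also have "\<dots> = 0" by (simp add: algebra_simps)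
      finally show ?thesis .
    qed
    then show False using d[of 5 3] d[of 5 4] by auto
  qed
  have e34: "b0 - a0 * (t 3 + t 4) - a1 * (t 3 * t 4) = 0" using E34 E by blast
  have e56: "b0 - a0 * (t 5 + t 6) - a1 * (t 5 * t 6) = 0" using E56 E by blast
  have main: "(a1 = 0 \<and> a0 \<noteq> 0 \<and> t 3 + t 4 = t 5 + t 6 \<and> (\<forall>x y. E x y \<longleftrightarrow> x + y = t 3 + t 4)) \<or>
      (a0 = 0 \<and> a1 \<noteq> 0 \<and> t 3 * t 4 = t 5 * t 6 \<and> t 3 * t 4 \<noteq> 0 \<and> (\<forall>x y. E x y \<longleftrightarrow> x * y = t 3 * t 4))"
  proof (cases "t 3 + t 4 = t 5 + t 6")
    case True
    then have pn: "t 3 * t 4 \<noteq> t 5 * t 6" using notboth by blast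
    have "a1 * (t 3 * t 4 - t 5 * t 6) = 0" using e34 e56 True by (simp add: algebra_simps)
    then have a1: "a1 = 0" using pn by simp
    then have a0: "a0 \<noteq> 0" using A by simp
    have b0: "b0 = a0 * (t 3 + t 4)" using e34 a1 by simp
    have "E x y \<longleftrightarrow> x + y = t 3 + t 4" for x y
      unfolding E using a0 by (auto simp: a1 b0 right_diff_distrib[symmetric])
    then show ?thesis using True a1 a0 by blast
  next
    case False
    then have pe: "t 3 * t 4 = t 5 * t 6" using sp by blast
    have "a0 * ((t 3 + t 4) - (t 5 + t 6)) = 0" using e34 e56 pe by (simp add: algebra_simps)
    then have a0: "a0 = 0" using False by simp
    then have a1: "a1 \<noteq> 0" using A by simp
    have b0: "b0 = a1 * (t 3 * t 4)" using e34 a0 by simp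
    have c0: "t 3 * t 4 \<noteq> 0"
    proof
      assume c: "t 3 * t 4 = 0"
      then have "t 5 * t 6 = 0" using pe by simp
      then show False using c d[of 3 5] d[of 3 6] d[of 4 5] d[of 4 6] by auto
    qed
    have "E x y \<longleftrightarrow> x * y = t 3 * t 4" for x y
      unfolding E using a1 by (auto simp: a0 b0 right_diff_distrib[symmetric])
    then show ?thesis using pe a1 a0 c0 by blast
  qed
  have inj1: "x = x'" if "E x y" "E x' y" for x x' y
    using main
  proof
    assume S: "a1 = 0 \<and> a0 \<noteq> 0 \<and> t 3 + t 4 = t 5 + t 6 \<and> (\<forall>x y. E x y \<longleftrightarrow> x + y = t 3 + t 4)"
    then show ?thesis using that by (metis add_right_cancel)
  next
    assume P: "a0 = 0 \<and> a1 \<noteq> 0 \<and> t 3 * t 4 = t 5 * t 6 \<and> t 3 * t 4 \<noteq> 0 \<and> (\<forall>x y. E x y \<longleftrightarrow> x * y = t 3 * t 4)"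
    then have "x * y = x' * y" "x * y \<noteq> 0" using that by auto
    then show ?thesis by simp
  qed
  show "E (t 1) (t 2) \<longrightarrow> (t 1 + t 2 = t 3 + t 4 \<and> t 3 + t 4 = t 5 + t 6) \<or>
            (t 1 * t 2 = t 3 * t 4 \<and> t 3 * t 4 = t 5 * t 6)"
    using main by auto
  show "E (t 1) (t 1) \<and> E (t 2) (t 2) \<longrightarrow> t 1 + t 2 = 0 \<and> t 1 ^ 2 = t 2 ^ 2 \<and>
            t 2 ^ 2 = t 3 * t 4 \<and> t 3 * t 4 = t 5 * t 6"
  proof
    assume h: "E (t 1) (t 1) \<and> E (t 2) (t 2)"
    have d12: "t 1 \<noteq> t 2" using d[of 1 2] by simp
    show "t 1 + t 2 = 0 \<and> t 1 ^ 2 = t 2 ^ 2 \<and> t 2 ^ 2 = t 3 * t 4 \<and> t 3 * t 4 = t 5 * t 6"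
      using main
    proof
      assume S: "a1 = 0 \<and> a0 \<noteq> 0 \<and> t 3 + t 4 = t 5 + t 6 \<and> (\<forall>x y. E x y \<longleftrightarrow> x + y = t 3 + t 4)"
      then have "t 1 + t 1 = t 2 + t 2" using h by simp
      then have "2 * (t 1 - t 2) = 0" by (simp add: algebra_simps)
      then have False using two d12 by simp
      then show ?thesis ..
    next
      assume P: "a0 = 0 \<and> a1 \<noteq> 0 \<and> t 3 * t 4 = t 5 * t 6 \<and> t 3 * t 4 \<noteq> 0 \<and> (\<forall>x y. E x y \<longleftrightarrow> x * y = t 3 * t 4)"
      then have s1: "t 1 * t 1 = t 3 * t 4" and s2: "t 2 * t 2 = t 3 * t 4" using h by auto
      have "(t 1 - t 2) * (t 1 + t 2) = 0" using s1 s2 by (simp add: algebra_simps)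
      then have "t 1 + t 2 = 0" using d12 by simp
      then show ?thesis using s1 s2 P by (simp add: power2_eq_square)
    qed
  qed
  show "\<forall>x k. k \<in> {3, 4, 5, 6} \<and> E x (t k) \<longrightarrow> x \<noteq> t 1 \<and> x \<noteq> t 2"
  proof (intro allI impI)
    fix x k assume h: "k \<in> {3, 4, 5, 6} \<and> E x (t k)"
    define p where "p = (if k = 3 then 4 else if k = 4 then 3 else if k = 5 then 6 else (5::nat))"
    have Ep: "E (t p) (t k)" using h E34 E56 Esym unfolding p_def by auto
    have "x = t p" using inj1[OF conjunct2[OF h] Ep] .
    moreover have "p \<in> {3, 4, 5, 6}" unfolding p_def by auto
    ultimately show "x \<noteq> t 1 \<and> x \<noteq> t 2" using d[of p 1] d[of p 2] by auto
  qed
qed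

context
  fixes \<theta> :: "nat \<Rightarrow> 'a::field" and M :: "nat \<Rightarrow> nat \<Rightarrow> 'a"
  assumes inj: "inj_on \<theta> JJ" and two: "(2::'a) \<noteq> 0"
    and GL0: "inGL0 \<theta> M" and invol: "involutive_on_S \<theta> M"
begin

lemma HS: "degree G \<le> 5 \<Longrightarrow> inS \<theta> G \<longleftrightarrow> inS \<theta> (Tm M G)"
proof -
  assume d: "degree G \<le> 5"
  have "(\<lambda>k. coeff G k) \<in> Scone \<theta> \<longleftrightarrow> mapply M (\<lambda>k. coeff G k) \<in> Scone \<theta>"
    using GL0 vec6_coeff[OF d] unfolding inGL0_def inGL_def by blast
  then show ?thesis
    unfolding Scone_iff[OF inj] Tm_def using vec6_coeff[OF d] Ppoly_coeff[OF d] mapply_vec6[of M "\<lambda>k. coeff G k"] by simp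
qed

lemma HD: "degree G \<le> 5 \<Longrightarrow> degree G \<le> 1 \<longleftrightarrow> degree (Tm M G) \<le> 1"
proof -
  assume d: "degree G \<le> 5"
  have "(\<lambda>k. coeff G k) \<in> Delta0 \<longleftrightarrow> mapply M (\<lambda>k. coeff G k) \<in> Delta0"
    using GL0 vec6_coeff[OF d] unfolding inGL0_def by blast
  then show ?thesis
    unfolding Delta0_iff Tm_def using vec6_coeff[OF d] Ppoly_coeff[OF d] mapply_vec6[of M "\<lambda>k. coeff G k"] by simp
qed

lemma HI: "degree G \<le> 5 \<Longrightarrow> Tm M G = 0 \<Longrightarrow> G = 0"
  using Tm_inj GL0 unfolding inGL0_def inGL_def by blast

lemma HV: "inS \<theta> G \<Longrightarrow> \<exists>c. c \<noteq> 0 \<and> Tm M (Tm M G) = smult c G"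
proof -
  assume G: "inS \<theta> G"
  have d: "degree G \<le> 5" using G by (simp add: inS_def)
  let ?p = "\<lambda>k. coeff G k"
  have "?p \<in> Scone \<theta>" using G vec6_coeff[OF d] Ppoly_coeff[OF d] by (simp add: Scone_iff[OF inj])
  then have "peq ?p (mapply M (mapply M ?p))" using invol unfolding involutive_on_S_def by blast
  then obtain c where c: "c \<noteq> 0" "Ppoly (mapply M (mapply M ?p)) = smult c (Ppoly ?p)"
    using peq_iff[OF vec6_coeff[OF d] mapply_vec6] by blast
  have "Ppoly (mapply M (mapply M ?p)) = Tm M (Tm M G)"
    by (simp add: Ppoly_mapply[OF mapply_vec6] Tm_def)
  then show ?thesis using c Ppoly_coeff[OF d] by auto
qed

lemma HD_Tm: "degree G \<le> 1 \<Longrightarrow> degree (Tm M G) \<le> 1"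
proof -
  assume a: "degree G \<le> 1"
  then have "degree G \<le> 5" by simp
  then show ?thesis using HD a by blast
qed

lemma inS_L: "inS \<theta> [:- x, 1:]"
  by (rule inS_deg1[OF inj]) auto

lemma Rel_sym:
  assumes "Rel M x y" shows "Rel M y x"
proof -
  obtain c where c: "c \<noteq> 0" "[:- y, 1:] = smult c (Tm M [:- x, 1:])" using assms unfolding Rel_def by blast
  obtain c' where c': "c' \<noteq> 0" "Tm M (Tm M [:- x, 1:]) = smult c' [:- x, 1:]" using HV[OF inS_L] by blast
  have "Tm M [:- y, 1:] = smult (c * c') [:- x, 1:]" using c c' by (simp add: Tm_smult)
  then have "[:- x, 1:] = smult (1 / (c * c')) (Tm M [:- y, 1:])" using c c' by simp
  then show ?thesis unfolding Rel_def using c c' by (intro exI[of _ "1 / (c * c')"]) simp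
qed

lemma L1:
  assumes i: "i \<in> JJ" shows "\<exists>k\<in>JJ. Rel M (\<theta> i) (\<theta> k)"
proof (rule ccontr)
  assume nk: "\<not> (\<exists>k\<in>JJ. Rel M (\<theta> i) (\<theta> k))"
  define Li where "Li = [:- \<theta> i, 1:]"
  define U where "U = Tm M Li"
  have dU: "degree U \<le> 1" unfolding U_def Li_def by (rule HD_Tm) simp
  have U0: "U \<noteq> 0" using HI[of Li] unfolding U_def Li_def by auto
  define v0 where "v0 = coeff U 0"
  define v1 where "v1 = coeff U 1"
  have Ueq: "U = [:v0, v1:]" unfolding v0_def v1_def by (rule deg1_eq[OF dU])
  have pU: "poly U x = v0 + v1 * x" for x by (subst Ueq) simp
  have Unz: "v0 + v1 * \<theta> k \<noteq> 0" if k: "k \<in> JJ" for k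
  proof
    assume z: "v0 + v1 * \<theta> k = 0"
    have v1: "v1 \<noteq> 0" using z U0 Ueq by auto
    have v0e: "v0 = - (v1 * \<theta> k)" using z by (simp add: eq_neg_iff_add_eq_0)
    have "[:- \<theta> k, 1:] = smult (1 / v1) U" using v0e v1 by (simp add: Ueq)
    then have "Rel M (\<theta> i) (\<theta> k)" unfolding Rel_def U_def Li_def using v1 by (intro exI[of _ "1/v1"]) simp
    then show False using nk k by blast
  qed
  have om: "omega \<theta> i \<noteq> 0" using omega_nz[OF inj i] .
  define w where "w = [:1:] - smult (2 / omega \<theta> i) (Pj \<theta> i)"
  have pw: "poly w (\<theta> j) = (if j = i then -1 else 1)" if "j \<in> JJ" for j
    using that om poly_Pj_other[of j i \<theta>] by (auto simp: w_def poly_Pj_self)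
  have dw: "degree w \<le> 5" unfolding w_def
    using degree_Pj_le[OF i, of \<theta>] by (intro degree_diff_le) auto
  have w0: "w \<noteq> 0" using pw[OF i] by auto
  have Sw: "inS \<theta> w" by (rule inS_of_vals[OF inj dw w0, of "[:1:]"]) (auto simp: pw)
  have dLw: "degree (Li + w) \<le> 5" using dw unfolding Li_def by (intro degree_add_le) auto
  have Lw0: "Li + w \<noteq> 0" using pw[OF i] by (auto simp: Li_def dest: arg_cong[where f = "\<lambda>p. poly p (\<theta> i)"])
  have SLw: "inS \<theta> (Li + w)"
  proof (rule inS_of_vals[OF inj dLw Lw0, of "Li + [:1:]"])
    show "degree (Li + [:1:]) \<le> 1" unfolding Li_def by simp
    fix j assume j: "j \<in> JJ"
    show "(poly (Li + w) (\<theta> j))\<^sup>2 = (poly (Li + [:1:]) (\<theta> j))\<^sup>2"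
      using pw[OF j] by (cases "j = i") (auto simp: Li_def algebra_simps)
  qed
  define Y where "Y = Tm M w"
  have SY: "inS \<theta> Y" using Sw HS[OF dw] unfolding Y_def by blast
  have SUY: "inS \<theta> (U + Y)" using SLw HS[OF dLw] unfolding Y_def U_def by (simp add: Tm_add)
  have SU: "inS \<theta> U" using HS[of Li] inS_L unfolding U_def Li_def by auto
  have cross: "sigf \<theta> (\<lambda>x. x ^ m * poly U x * poly Y x) = 0" if m: "m < 3" for m
  proof -
    have "sigf \<theta> (\<lambda>x. x ^ m * (poly (U + Y) x)\<^sup>2) =
        sigf \<theta> (\<lambda>x. x ^ m * (poly U x)\<^sup>2) + 2 * sigf \<theta> (\<lambda>x. x ^ m * poly U x * poly Y x)
        + sigf \<theta> (\<lambda>x. x ^ m * (poly Y x)\<^sup>2)"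
    proof -
      have "(\<lambda>x. x ^ m * (poly (U + Y) x)\<^sup>2) = (\<lambda>x. (x ^ m * (poly U x)\<^sup>2 + 2 * (x ^ m * poly U x * poly Y x))
          + x ^ m * (poly Y x)\<^sup>2)"
        by (rule ext) (simp add: power2_eq_square algebra_simps)
      then show ?thesis by (simp only: sigf_add sigf_smult)
    qed
    then show ?thesis using inS_sig[OF SY m] inS_sig[OF SUY m] inS_sig[OF SU m] two by simp
  qed
  have dY: "degree Y \<le> 5" unfolding Y_def by (rule degree_Tm)
  have "degree Y \<le> 1"
  proof (rule GL_lemma[OF inj Unz dY])
    show "sigf \<theta> (\<lambda>x. x ^ m * (v0 + v1 * x) * poly Y x) = 0" if "m < 3" for m
      using cross[OF that] by (simp add: pU)
    show "sigf \<theta> (\<lambda>x. (poly Y x)\<^sup>2) = 0" using inS_sig[OF SY, of 0] by simp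
    show "sigf \<theta> (\<lambda>x. x * (poly Y x)\<^sup>2) = 0" using inS_sig[OF SY, of 1] by simp
  qed
  then have dw1: "degree w \<le> 1" using HD[OF dw] unfolding Y_def by blast
  define k1 where "k1 = (if i = 1 then 3 else (1::nat))"
  define k2 where "k2 = (if i = 2 then 4 else (2::nat))"
  have k: "k1 \<in> JJ" "k2 \<in> JJ" "k1 \<noteq> i" "k2 \<noteq> i" "k1 \<noteq> k2" unfolding k1_def k2_def by auto
  have "\<theta> k1 \<noteq> \<theta> k2" using inj k by (auto dest: inj_onD)
  moreover have "degree (w - [:1:]) \<le> 1" using dw1 by (intro degree_diff_le) auto
  moreover have "poly (w - [:1:]) (\<theta> k1) = 0" "poly (w - [:1:]) (\<theta> k2) = 0" using pw k by auto
  ultimately have "w - [:1:] = 0" using deg1_two_roots by blast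
  then have "w = [:1:]" by simp
  then have "poly w (\<theta> i) = 1" by simp
  then show False using pw[OF i] two by simp
qed

lemma L2:
  assumes lam0: "lm \<noteq> 0" and lam: "\<And>U. degree U \<le> 1 \<Longrightarrow> Tm M U = smult lm U"
  shows "in_Inv \<theta> M"
proof -
  define t where "t i = Tm M (Pj \<theta> i)" for i
  have dt: "degree (t i) \<le> 5" for i unfolding t_def by (rule degree_Tm)
  have ii: "lm * sigf \<theta> (\<lambda>x. x ^ m * poly U x * poly (t i) x)
      = (poly U (\<theta> i) / omega \<theta> i) * sigf \<theta> (\<lambda>x. x ^ m * (poly (t i) x)\<^sup>2)"
    if i: "i \<in> JJ" and dU: "degree U \<le> 1" and u0: "poly U (\<theta> i) \<noteq> 0" and m: "m < 3" for U i m
  proof -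
    define u where "u = poly U (\<theta> i)"
    have om: "omega \<theta> i \<noteq> 0" using omega_nz[OF inj i] .
    define a where "a = 2 * u / omega \<theta> i"
    have a0: "a \<noteq> 0" using u0 om two by (simp add: a_def u_def)
    define V where "V = U - smult a (Pj \<theta> i)"
    have pV: "poly V (\<theta> j) = (if j = i then - u else poly U (\<theta> j))" if j: "j \<in> JJ" for j
    proof (cases "j = i")
      case True then show ?thesis using om by (simp add: V_def a_def poly_Pj_self u_def)
    next
      case False then show ?thesis using poly_Pj_other[OF j False, of \<theta>] by (simp add: V_def)
    qed
    have dV: "degree V \<le> 5" unfolding V_def
      using dU degree_Pj_le[OF i, of \<theta>] by (intro degree_diff_le) auto
    have V0: "V \<noteq> 0" using pV[OF i] u0 by (auto simp: u_def)
    have SV: "inS \<theta> V"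
      by (rule inS_of_vals[OF inj dV V0 dU]) (auto simp: pV u_def)
    have TV: "Tm M V = smult lm U - smult a (t i)"
      unfolding V_def t_def by (simp add: Tm_diff Tm_smult lam[OF dU])
    have STV: "inS \<theta> (Tm M V)" using SV HS[OF dV] by blast
    have "(\<lambda>x. x ^ m * (poly (Tm M V) x)\<^sup>2) = (\<lambda>x. (lm * lm) * (x ^ m * poly U x * poly U x)
        + ((- 2 * lm * a) * (x ^ m * poly U x * poly (t i) x) + (a * a) * (x ^ m * (poly (t i) x)\<^sup>2)))"
      by (rule ext) (simp add: TV power2_eq_square algebra_simps)
    then have eq: "sigf \<theta> (\<lambda>x. x ^ m * (poly (Tm M V) x)\<^sup>2) = (lm * lm) * sigf \<theta> (\<lambda>x. x ^ m * poly U x * poly U x)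
        + ((- 2 * lm * a) * sigf \<theta> (\<lambda>x. x ^ m * poly U x * poly (t i) x)
        + (a * a) * sigf \<theta> (\<lambda>x. x ^ m * (poly (t i) x)\<^sup>2))"
      by (simp only: sigf_add sigf_smult)
    have z1: "sigf \<theta> (\<lambda>x. x ^ m * poly U x * poly U x) = 0" by (rule sigf_xm_deg1[OF inj dU dU m])
    have z2: "sigf \<theta> (\<lambda>x. x ^ m * (poly (Tm M V) x)\<^sup>2) = 0" by (rule inS_sig[OF STV m])
    have "a * sigf \<theta> (\<lambda>x. x ^ m * (poly (t i) x)\<^sup>2) = 2 * (lm * sigf \<theta> (\<lambda>x. x ^ m * poly U x * poly (t i) x))"
      by (rule alg1[OF a0 eq[unfolded z1 z2]])
    then show ?thesis by (intro alg2[OF two om]) (simp add: a_def u_def)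
  qed
  have ii1: "lm * sigf \<theta> (\<lambda>x. x ^ m * poly (t i) x)
      = (1 / omega \<theta> i) * sigf \<theta> (\<lambda>x. x ^ m * (poly (t i) x)\<^sup>2)"
    if i: "i \<in> JJ" and m: "m < 3" for i m
    using ii[OF i _ _ m, of "[:1:]"] by simp
  have iip: "sigf \<theta> (\<lambda>x. x ^ m * (x - \<theta> i) * poly (t i) x) = 0" if i: "i \<in> JJ" and m: "m < 3" for i m
  proof -
    have e2: "lm * sigf \<theta> (\<lambda>x. x ^ m * poly [:1 - \<theta> i, 1:] x * poly (t i) x)
      = (1 / omega \<theta> i) * sigf \<theta> (\<lambda>x. x ^ m * (poly (t i) x)\<^sup>2)"
      using ii[OF i _ _ m, of "[:1 - \<theta> i, 1:]"] by simp
    have "(\<lambda>x. x ^ m * poly [:1 - \<theta> i, 1:] x * poly (t i) x) =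
        (\<lambda>x. x ^ m * (x - \<theta> i) * poly (t i) x + x ^ m * poly (t i) x)"
      by (rule ext) (simp add: algebra_simps)
    then have "sigf \<theta> (\<lambda>x. x ^ m * poly [:1 - \<theta> i, 1:] x * poly (t i) x) =
        sigf \<theta> (\<lambda>x. x ^ m * (x - \<theta> i) * poly (t i) x) + sigf \<theta> (\<lambda>x. x ^ m * poly (t i) x)"
      by (simp only: sigf_add)
    then have "lm * sigf \<theta> (\<lambda>x. x ^ m * (x - \<theta> i) * poly (t i) x) = 0"
      using e2 ii1[OF i m] by (simp add: algebra_simps)
    then show ?thesis using lam0 by simp
  qed
  have "\<forall>i\<in>JJ. \<exists>zd. degree (fst zd) \<le> 1 \<and> t i = fst zd + smult (snd zd) (Pj \<theta> i)"
  proof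
    fix i assume i: "i \<in> JJ"
    obtain Z d where "degree Z \<le> 1 \<and> t i = Z + smult d (Pj \<theta> i)"
      using sol_space[OF inj i dt iip[OF i]] by blast
    then show "\<exists>zd. degree (fst zd) \<le> 1 \<and> t i = fst zd + smult (snd zd) (Pj \<theta> i)"
      by (intro exI[of _ "(Z, d)"]) simp
  qed
  then obtain f where f: "\<forall>i\<in>JJ. degree (fst (f i)) \<le> 1 \<and> t i = fst (f i) + smult (snd (f i)) (Pj \<theta> i)"
    by (rule bchoice[elim_format]) blast
  define Z where "Z i = fst (f i)" for i
  define d where "d i = snd (f i)" for i
  have dZ: "degree (Z i) \<le> 1" if "i \<in> JJ" for i using f that by (simp add: Z_def)
  have tZ: "t i = Z i + smult (d i) (Pj \<theta> i)" if "i \<in> JJ" for i using f that by (simp add: Z_def d_def)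
  have d0: "d i \<noteq> 0" if i: "i \<in> JJ" for i
  proof
    assume "d i = 0"
    then have "degree (Tm M (Pj \<theta> i)) \<le> 1" using tZ[OF i] dZ[OF i] by (simp add: t_def)
    then have "degree (Pj \<theta> i) \<le> 1" using HD[OF degree_Pj_le[OF i]] by blast
    then show False using degree_Pj[OF i, of \<theta>] by simp
  qed
  have iii: "sigf \<theta> (\<lambda>x. x ^ m * poly (t i) x * poly (t k) x) = 0"
    if i: "i \<in> JJ" and k: "k \<in> JJ" and ik: "i \<noteq> k" and m: "m < 3" for i k m
  proof -
    have omi: "omega \<theta> i \<noteq> 0" using omega_nz[OF inj i] .
    have omk: "omega \<theta> k \<noteq> 0" using omega_nz[OF inj k] .
    define a where "a = 2 / omega \<theta> i"
    define b where "b = 2 / omega \<theta> k"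
    define V where "V = [:1:] - smult a (Pj \<theta> i) - smult b (Pj \<theta> k)"
    have pV: "poly V (\<theta> j) = (if j = i \<or> j = k then -1 else 1)" if j: "j \<in> JJ" for j
    proof -
      consider "j = i" | "j = k" | "j \<noteq> i" "j \<noteq> k" by blast
      then show ?thesis
      proof cases
        case 1 then show ?thesis using omi ik poly_Pj_other[OF i ik, of \<theta>]
          by (simp add: V_def a_def poly_Pj_self)
      next
        case 2 then show ?thesis using omk ik poly_Pj_other[OF k ik[symmetric], of \<theta>]
          by (simp add: V_def b_def poly_Pj_self)
      next
        case 3 then show ?thesis using poly_Pj_other[OF j 3(1), of \<theta>] poly_Pj_other[OF j 3(2), of \<theta>]
          by (simp add: V_def)
      qed
    qed
    have dV: "degree V \<le> 5" unfolding V_def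
      using degree_Pj_le[OF i, of \<theta>] degree_Pj_le[OF k, of \<theta>]
      by (intro degree_diff_le) auto
    have V0: "V \<noteq> 0" using pV[OF i] by auto
    have SV: "inS \<theta> V" by (rule inS_of_vals[OF inj dV V0, of "[:1:]"]) (auto simp: pV)
    have TV: "Tm M V = smult lm [:1:] - smult a (t i) - smult b (t k)"
      unfolding V_def t_def by (simp add: Tm_diff Tm_smult lam)
    have STV: "inS \<theta> (Tm M V)" using SV HS[OF dV] by blast
    have "(\<lambda>x. x ^ m * (poly (Tm M V) x)\<^sup>2) = (\<lambda>x. (lm * lm) * x ^ m
        + ((- 2 * lm * a) * (x ^ m * poly (t i) x) + ((- 2 * lm * b) * (x ^ m * poly (t k) x)
        + ((a * a) * (x ^ m * (poly (t i) x)\<^sup>2) + ((b * b) * (x ^ m * (poly (t k) x)\<^sup>2)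
        + (2 * a * b) * (x ^ m * poly (t i) x * poly (t k) x))))))"
      by (rule ext) (simp add: TV power2_eq_square algebra_simps)
    then have eq: "sigf \<theta> (\<lambda>x. x ^ m * (poly (Tm M V) x)\<^sup>2) = (lm * lm) * sigf \<theta> (\<lambda>x. x ^ m)
        + ((- 2 * lm * a) * sigf \<theta> (\<lambda>x. x ^ m * poly (t i) x)
        + ((- 2 * lm * b) * sigf \<theta> (\<lambda>x. x ^ m * poly (t k) x)
        + ((a * a) * sigf \<theta> (\<lambda>x. x ^ m * (poly (t i) x)\<^sup>2)
        + ((b * b) * sigf \<theta> (\<lambda>x. x ^ m * (poly (t k) x)\<^sup>2)
        + (2 * a * b) * sigf \<theta> (\<lambda>x. x ^ m * poly (t i) x * poly (t k) x)))))"
      by (simp only: sigf_add sigf_smult)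
    have z1: "sigf \<theta> (\<lambda>x. x ^ m) = 0"
      using sigf_xm_deg1[OF inj _ _ m, of "[:1:]" "[:1:]"] by simp
    have z2: "sigf \<theta> (\<lambda>x. x ^ m * (poly (Tm M V) x)\<^sup>2) = 0" by (rule inS_sig[OF STV m])
    show ?thesis by (rule alg3[OF two omi omk ii1[OF i m] ii1[OF k m] eq[unfolded z1 z2 a_def b_def]])
  qed
  have v: "d k * \<theta> k ^ m * poly (Z i) (\<theta> k) + d i * \<theta> i ^ m * poly (Z k) (\<theta> i) = 0"
    if i: "i \<in> JJ" and k: "k \<in> JJ" and ik: "i \<noteq> k" and m: "m < 3" for i k m
  proof -
    have "(\<lambda>x. x ^ m * poly (t i) x * poly (t k) x) = (\<lambda>x. x ^ m * poly (Z i) x * poly (Z k) x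
        + ((d k * x ^ m * poly (Z i) x) * poly (Pj \<theta> k) x + ((d i * x ^ m * poly (Z k) x) * poly (Pj \<theta> i) x
        + (d i * d k * x ^ m * poly (Pj \<theta> i) x) * poly (Pj \<theta> k) x)))"
      by (rule ext) (simp add: tZ[OF i] tZ[OF k] algebra_simps)
    then have "sigf \<theta> (\<lambda>x. x ^ m * poly (t i) x * poly (t k) x) =
        sigf \<theta> (\<lambda>x. x ^ m * poly (Z i) x * poly (Z k) x)
        + (sigf \<theta> (\<lambda>x. (d k * x ^ m * poly (Z i) x) * poly (Pj \<theta> k) x)
        + (sigf \<theta> (\<lambda>x. (d i * x ^ m * poly (Z k) x) * poly (Pj \<theta> i) x)
        + sigf \<theta> (\<lambda>x. (d i * d k * x ^ m * poly (Pj \<theta> i) x) * poly (Pj \<theta> k) x)))"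
      by (simp only: sigf_add)
    also have "\<dots> = 0 + (d k * \<theta> k ^ m * poly (Z i) (\<theta> k) + (d i * \<theta> i ^ m * poly (Z k) (\<theta> i)
        + d i * d k * \<theta> k ^ m * poly (Pj \<theta> i) (\<theta> k)))"
      using sigf_xm_deg1[OF inj dZ[OF i] dZ[OF k] m]
      by (simp only: sigf_Pj[OF inj k] sigf_Pj[OF inj i])
    also have "\<dots> = d k * \<theta> k ^ m * poly (Z i) (\<theta> k) + d i * \<theta> i ^ m * poly (Z k) (\<theta> i)"
      using poly_Pj_other[OF k ik[symmetric], of \<theta>] by simp
    finally show ?thesis using iii[OF i k ik m] by simp
  qed
  have Zroot: "poly (Z i) (\<theta> k) = 0" if i: "i \<in> JJ" and k: "k \<in> JJ" and ik: "i \<noteq> k" for i k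
  proof -
    have e0: "d k * poly (Z i) (\<theta> k) + d i * poly (Z k) (\<theta> i) = 0" using v[OF i k ik, of 0] by simp
    have e1: "d k * \<theta> k * poly (Z i) (\<theta> k) + d i * \<theta> i * poly (Z k) (\<theta> i) = 0" using v[OF i k ik, of 1] by simp
    have "(\<theta> k - \<theta> i) * (d k * poly (Z i) (\<theta> k)) = 0"
    proof -
      have "(\<theta> k - \<theta> i) * (d k * poly (Z i) (\<theta> k)) =
          (d k * \<theta> k * poly (Z i) (\<theta> k) + d i * \<theta> i * poly (Z k) (\<theta> i))
          - \<theta> i * (d k * poly (Z i) (\<theta> k) + d i * poly (Z k) (\<theta> i))"
        by (simp add: algebra_simps)
      then show ?thesis using e0 e1 by simp
    qed
    moreover have "\<theta> k \<noteq> \<theta> i" using inj i k ik by (auto dest: inj_onD)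
    ultimately show ?thesis using d0[OF k] by simp
  qed
  have Z0: "Z i = 0" if i: "i \<in> JJ" for i
  proof -
    define k1 where "k1 = (if i = 1 then 3 else (1::nat))"
    define k2 where "k2 = (if i = 2 then 4 else (2::nat))"
    have k: "k1 \<in> JJ" "k2 \<in> JJ" "k1 \<noteq> i" "k2 \<noteq> i" "k1 \<noteq> k2" unfolding k1_def k2_def by auto
    have "\<theta> k1 \<noteq> \<theta> k2" using inj k by (auto dest: inj_onD)
    then show ?thesis using deg1_two_roots[OF dZ[OF i] Zroot[OF i k(1) k(3)[symmetric]] Zroot[OF i k(2) k(4)[symmetric]]]
      by blast
  qed
  have tE: "t i = smult (d i) (Pj \<theta> i)" if "i \<in> JJ" for i using tZ[OF that] Z0[OF that] by simp
  have Tinterp: "Tm M (interp \<theta> y) = interp \<theta> (\<lambda>j. d j * y j)" for y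
    unfolding interp_def Tm_sum by (intro sum.cong refl) (simp add: Tm_smult t_def[symmetric] tE ac_simps)
  have dl: "d k = lm" if k: "k \<in> JJ" for k
  proof -
    have I1: "[:1:] = interp \<theta> (\<lambda>j. 1)" using lagrange[OF inj, of "[:1:]"] by simp
    have "smult lm [:1:] = Tm M [:1:]" using lam[of "[:1:]"] by simp
    also have "\<dots> = Tm M (interp \<theta> (\<lambda>j. 1))" by (rule arg_cong[OF I1])
    also have "\<dots> = interp \<theta> (\<lambda>j. d j * 1)" by (rule Tinterp)
    finally have "smult lm [:1:] = interp \<theta> (\<lambda>j. d j * 1)" .
    then have "poly (smult lm [:1:]) (\<theta> k) = poly (interp \<theta> (\<lambda>j. d j * 1)) (\<theta> k)" by simp
    then show ?thesis using poly_interp[OF inj k] by simp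
  qed
  have Tall: "Tm M G = smult lm G" if dG: "degree G \<le> 5" for G
  proof -
    have "Tm M G = interp \<theta> (\<lambda>j. d j * poly G (\<theta> j))" using lagrange[OF inj dG] Tinterp by metis
    also have "\<dots> = interp \<theta> (\<lambda>j. lm * poly G (\<theta> j))"
      unfolding interp_def by (intro sum.cong refl) (simp add: dl)
    also have "\<dots> = smult lm G"
      by (rule poly_eq_roots[OF inj degree_interp]) (use dG poly_interp[OF inj] in auto)
    finally show ?thesis .
  qed
  show ?thesis unfolding in_Inv_def
  proof (intro exI[of _ "\<lambda>_. 1"] conjI ballI)
    fix j :: nat assume "j \<in> JJ" then show "(1::'a) = 1 \<or> (1::'a) = - 1" by simp
  next
    fix p assume p: "p \<in> Scone \<theta>"
    then have pv: "p \<in> vec6" by (simp add: Scone_iff[OF inj])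
    have "Ppoly (mapply M p) = smult lm (Ppoly p)"
      using Ppoly_mapply[OF pv] Tall[OF degree_Ppoly] by simp
    then show "\<exists>c. c \<noteq> 0 \<and> (\<forall>j\<in>JJ. piC \<theta> j (mapply M p) = c * 1 * piC \<theta> j p)"
      using lam0 by (intro exI[of _ lm]) (simp add: piC_def)
  qed
qed

lemma TL: "Tm M [:- x, 1:] = Tm M [:0, 1:] - smult x (Tm M [:1:])"
proof -
  have e: "[:- x, 1:] = [:0, 1:] - smult x [:1:]" by simp
  have "Tm M [:- x, 1:] = Tm M ([:0, 1:] - smult x [:1:])" by (rule arg_cong[OF e])
  also have "\<dots> = Tm M [:0, 1:] - smult x (Tm M [:1:])" by (simp only: Tm_diff Tm_smult)
  finally show ?thesis .
qed

lemma RelE: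
  assumes "Rel M x y"
  shows "coeff (Tm M [:0, 1:]) 0 + coeff (Tm M [:0, 1:]) 1 * y
     - x * (coeff (Tm M [:1:]) 0 + coeff (Tm M [:1:]) 1 * y) = 0"
proof -
  have dA: "degree (Tm M [:1:]) \<le> 1" by (rule HD_Tm) simp
  have dB: "degree (Tm M [:0, 1:]) \<le> 1" by (rule HD_Tm) simp
  have "poly (Tm M [:0, 1:] - smult x (Tm M [:1:])) y = 0" using Rel_root[OF assms] TL by simp
  then show ?thesis by (subst (asm) deg1_eq[OF dA], subst (asm) deg1_eq[OF dB]) (simp add: algebra_simps)
qed

lemma A_nz: "Tm M [:1:] \<noteq> 0"
  using HI[of "[:1:]"] by auto

lemma tau_ex: "i \<in> JJ \<Longrightarrow> \<exists>k. k \<in> JJ \<and> Rel M (\<theta> i) (\<theta> k)"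
  using L1 by blast

lemma part1:
  assumes notInv: "\<not> in_Inv \<theta> M"
  shows "\<exists>\<sigma>. \<sigma> permutes JJ \<and> Rel M (\<theta> (\<sigma> 3)) (\<theta> (\<sigma> 4)) \<and> Rel M (\<theta> (\<sigma> 5)) (\<theta> (\<sigma> 6))"
proof -
  define a0 where "a0 = coeff (Tm M [:1:]) 0"
  define a1 where "a1 = coeff (Tm M [:1:]) 1"
  define b0 where "b0 = coeff (Tm M [:0, 1:]) 0"
  define b1 where "b1 = coeff (Tm M [:0, 1:]) 1"
  have dA: "degree (Tm M [:1:]) \<le> 1" by (rule HD_Tm) simp
  have dB: "degree (Tm M [:0, 1:]) \<le> 1" by (rule HD_Tm) simp
  have Aeq: "Tm M [:1:] = [:a0, a1:]" unfolding a0_def a1_def by (rule deg1_eq[OF dA])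
  have Beq: "Tm M [:0, 1:] = [:b0, b1:]" unfolding b0_def b1_def by (rule deg1_eq[OF dB])
  define q where "q = [:b0, b1 - a0, - a1:]"
  have qroot: "poly q x = 0" if "Rel M x x" for x
    using RelE[OF that] unfolding q_def a0_def a1_def b0_def b1_def by (simp add: algebra_simps power2_eq_square)
  show ?thesis
  proof (cases "q = 0")
    case True
    then have z: "b0 = 0" "b1 = a0" "a1 = 0" unfolding q_def by auto
    have a00: "a0 \<noteq> 0" using A_nz Aeq z by auto
    have "Tm M U = smult a0 U" if dU: "degree U \<le> 1" for U
    proof -
      have "[:coeff U 0, coeff U 1:] = smult (coeff U 0) [:1:] + smult (coeff U 1) [:0, 1:]" by simp
      then have eqU: "U = smult (coeff U 0) [:1:] + smult (coeff U 1) [:0, 1:]"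
        using deg1_eq[OF dU] by simp
      have "Tm M U = Tm M (smult (coeff U 0) [:1:] + smult (coeff U 1) [:0, 1:])"
        by (rule arg_cong[OF eqU])
      also have "\<dots> = smult (coeff U 0) (Tm M [:1:]) + smult (coeff U 1) (Tm M [:0, 1:])"
        by (simp only: Tm_add Tm_smult)
      also have "\<dots> = smult a0 [:coeff U 0, coeff U 1:]" using Aeq Beq z by (simp add: ac_simps)
      also have "\<dots> = smult a0 U" using deg1_eq[OF dU] by simp
      finally show ?thesis .
    qed
    then have "in_Inv \<theta> M" using L2[OF a00] by blast
    then show ?thesis using notInv by blast
  next
    case False
    define Fx where "Fx = {i \<in> JJ. Rel M (\<theta> i) (\<theta> i)}"
    have "card Fx \<le> 2"
    proof -
      have "\<theta> ` Fx \<subseteq> {x. poly q x = 0}" using qroot unfolding Fx_def by auto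
      then have "card (\<theta> ` Fx) \<le> card {x. poly q x = 0}"
        by (intro card_mono poly_roots_finite False)
      also have "\<dots> \<le> degree q" by (rule card_poly_roots_bound[OF False])
      also have "\<dots> \<le> 2" unfolding q_def by simp
      finally have "card (\<theta> ` Fx) \<le> 2" .
      moreover have "inj_on \<theta> Fx" using inj unfolding Fx_def by (rule inj_on_subset) auto
      ultimately show ?thesis by (simp add: card_image)
    qed
    define \<tau> where "\<tau> i = (SOME k. k \<in> JJ \<and> Rel M (\<theta> i) (\<theta> k))" for i
    have tau: "\<tau> i \<in> JJ \<and> Rel M (\<theta> i) (\<theta> (\<tau> i))" if "i \<in> JJ" for i
      unfolding \<tau>_def by (rule someI_ex[OF tau_ex[OF that]])
    have tau_uniq: "\<tau> i = k" if "i \<in> JJ" "k \<in> JJ" "Rel M (\<theta> i) (\<theta> k)" for i k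
    proof -
      have "\<theta> (\<tau> i) = \<theta> k" using Rel_unique tau[OF that(1)] that(3) by blast
      then show ?thesis using inj tau[OF that(1)] that(2) by (auto dest: inj_onD)
    qed
    have tau_inv: "\<tau> (\<tau> i) = i" if "i \<in> JJ" for i
      using tau_uniq[OF conjunct1[OF tau[OF that]] that Rel_sym[OF conjunct2[OF tau[OF that]]]] .
    define NF where "NF = {i \<in> JJ. \<tau> i \<noteq> i}"
    have "JJ - NF \<subseteq> Fx"
    proof
      fix x assume x: "x \<in> JJ - NF"
      then have "\<tau> x = x" "x \<in> JJ" unfolding NF_def by auto
      then show "x \<in> Fx" using tau[of x] unfolding Fx_def by simp
    qed
    then have "card (JJ - NF) \<le> 2" using \<open>card Fx \<le> 2\<close> card_mono[of Fx "JJ - NF"] unfolding Fx_def by auto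
    moreover have "card JJ = card NF + card (JJ - NF)"
    proof -
      have sub: "NF \<subseteq> JJ" unfolding NF_def by auto
      have "card (JJ - NF) = card JJ - card NF" using sub by (intro card_Diff_subset) (auto intro: finite_subset)
      moreover have "card NF \<le> card JJ" using sub by (intro card_mono) auto
      ultimately show ?thesis by simp
    qed
    ultimately have cNF: "card NF \<ge> 4" by simp
    have fNF: "finite NF" unfolding NF_def by auto
    have "NF \<noteq> {}" using cNF by auto
    then obtain i1 where i1: "i1 \<in> NF" by blast
    define i2 where "i2 = \<tau> i1"
    have i1J: "i1 \<in> JJ" and i21: "i2 \<noteq> i1" using i1 unfolding NF_def i2_def by auto
    have i2J: "i2 \<in> JJ" unfolding i2_def using tau[OF i1J] by blast
    have ti2: "\<tau> i2 = i1" unfolding i2_def using tau_inv[OF i1J] .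
    have i2NF: "i2 \<in> NF" unfolding NF_def using i2J ti2 i21 by auto
    have "card (NF - {i1, i2}) \<ge> 2" using cNF card_Diff_subset[of "{i1, i2}" NF] i1 i2NF fNF i21
      by (simp add: card_insert_if)
    then have "NF - {i1, i2} \<noteq> {}" by (intro notI) simp
    then obtain i3 where i3: "i3 \<in> NF - {i1, i2}" by blast
    define i4 where "i4 = \<tau> i3"
    have i3J: "i3 \<in> JJ" and i43: "i4 \<noteq> i3" using i3 unfolding NF_def i4_def by auto
    have i4J: "i4 \<in> JJ" unfolding i4_def using tau[OF i3J] by blast
    have ti4: "\<tau> i4 = i3" unfolding i4_def using tau_inv[OF i3J] .
    have i31: "i3 \<noteq> i1" and i32: "i3 \<noteq> i2" using i3 by auto
    have i41: "i4 \<noteq> i1" using ti4 i32 unfolding i2_def by auto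
    have i42: "i4 \<noteq> i2" using ti4 ti2 i31 by auto
    define R where "R = JJ - {i1, i2, i3, i4}"
    have "card {i1, i2, i3, i4} = 4" using i21 i31 i32 i41 i42 i43 by auto
    then have "card R = 2" unfolding R_def using i1J i2J i3J i4J by (subst card_Diff_subset) auto
    then obtain i5 i6 where R56: "R = {i5, i6}" "i5 \<noteq> i6" by (auto simp: card_2_iff)
    define \<sigma> where "\<sigma> n = (if n = 1 then i5 else if n = 2 then i6 else if n = 3 then i1
        else if n = 4 then i2 else if n = 5 then i3 else if n = 6 then i4 else n)" for n :: nat
    have JJe: "JJ = {1, 2, 3, 4, 5, 6}" by auto
    have img: "\<sigma> ` JJ = JJ"
    proof -
      have "\<sigma> ` JJ = {i5, i6, i1, i2, i3, i4}" unfolding JJe by (simp add: \<sigma>_def insert_commute)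
      also have "\<dots> = R \<union> {i1, i2, i3, i4}" using R56 by auto
      also have "\<dots> = JJ" unfolding R_def using i1J i2J i3J i4J by auto
      finally show ?thesis .
    qed
    have "card (\<sigma> ` JJ) = card JJ" by (simp only: img)
    then have "inj_on \<sigma> JJ" by (intro eq_card_imp_inj_on) auto
    then have "bij_betw \<sigma> JJ JJ" using img by (simp add: bij_betw_def)
    moreover have "\<sigma> x = x" if "x \<notin> JJ" for x using that by (auto simp: \<sigma>_def)
    ultimately have perm: "\<sigma> permutes JJ" by (rule bij_imp_permutes)
    have "Rel M (\<theta> (\<sigma> 3)) (\<theta> (\<sigma> 4))" using tau[OF i1J] by (simp add: \<sigma>_def i2_def)
    moreover have "Rel M (\<theta> (\<sigma> 5)) (\<theta> (\<sigma> 6))" using tau[OF i3J] by (simp add: \<sigma>_def i4_def)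
    ultimately show ?thesis using perm by blast
  qed
qed

lemma part2:
  assumes R34: "Rel M (\<theta> 3) (\<theta> 4)" and R56: "Rel M (\<theta> 5) (\<theta> 6)"
    and sp: "\<theta> 3 + \<theta> 4 = \<theta> 5 + \<theta> 6 \<or> \<theta> 3 * \<theta> 4 = \<theta> 5 * \<theta> 6"
  shows "(Rel M (\<theta> 1) (\<theta> 2) \<longrightarrow>
             (\<theta> 1 + \<theta> 2 = \<theta> 3 + \<theta> 4 \<and> \<theta> 3 + \<theta> 4 = \<theta> 5 + \<theta> 6) \<or>
             (\<theta> 1 * \<theta> 2 = \<theta> 3 * \<theta> 4 \<and> \<theta> 3 * \<theta> 4 = \<theta> 5 * \<theta> 6))
          \<and>
          (\<not> Rel M (\<theta> 1) (\<theta> 2) \<longrightarrow>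
             Rel M (\<theta> 1) (\<theta> 1) \<and> Rel M (\<theta> 2) (\<theta> 2) \<and>
             \<theta> 1 + \<theta> 2 = 0 \<and>
             \<theta> 1 ^ 2 = \<theta> 2 ^ 2 \<and> \<theta> 2 ^ 2 = \<theta> 3 * \<theta> 4 \<and>
             \<theta> 3 * \<theta> 4 = \<theta> 5 * \<theta> 6)"
proof -
  define a0 where "a0 = coeff (Tm M [:1:]) 0"
  define a1 where "a1 = coeff (Tm M [:1:]) 1"
  define b0 where "b0 = coeff (Tm M [:0, 1:]) 0"
  define b1 where "b1 = coeff (Tm M [:0, 1:]) 1"
  have dA: "degree (Tm M [:1:]) \<le> 1" by (rule HD_Tm) simp
  have Aeq: "Tm M [:1:] = [:a0, a1:]" unfolding a0_def a1_def by (rule deg1_eq[OF dA])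
  have A: "a0 \<noteq> 0 \<or> a1 \<noteq> 0" using A_nz Aeq by auto
  have RE: "b0 + b1 * y - x * (a0 + a1 * y) = 0" if "Rel M x y" for x y
    using RelE[OF that] unfolding a0_def a1_def b0_def b1_def .
  have e34: "b0 + b1 * \<theta> 4 - \<theta> 3 * (a0 + a1 * \<theta> 4) = 0" by (rule RE[OF R34])
  have e43: "b0 + b1 * \<theta> 3 - \<theta> 4 * (a0 + a1 * \<theta> 3) = 0" by (rule RE[OF Rel_sym[OF R34]])
  have "(\<theta> 4 - \<theta> 3) * (b1 + a0) = 0" using e34 e43 by algebra
  moreover have "\<theta> 4 \<noteq> \<theta> 3" using inj by (auto dest: inj_onD)
  ultimately have b1: "b1 = - a0" by (simp add: eq_neg_iff_add_eq_0)
  define E where "E x y \<longleftrightarrow> b0 - a0 * (x + y) - a1 * (x * y) = 0" for x y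
  have RelE': "E x y" if "Rel M x y" for x y
    using RE[OF that] unfolding E_def b1 by (simp add: algebra_simps)
  note alg = part2_alg[of \<theta> a0 a1 E b0, OF inj two A E_def RelE'[OF R34] RelE'[OF R56] sp]
  have L1': "\<exists>k\<in>JJ. Rel M (\<theta> i) (\<theta> k)" if "i \<in> JJ" for i using L1[OF that] .
  show ?thesis
  proof (intro conjI impI)
    assume "Rel M (\<theta> 1) (\<theta> 2)"
    then show "(\<theta> 1 + \<theta> 2 = \<theta> 3 + \<theta> 4 \<and> \<theta> 3 + \<theta> 4 = \<theta> 5 + \<theta> 6) \<or>
             (\<theta> 1 * \<theta> 2 = \<theta> 3 * \<theta> 4 \<and> \<theta> 3 * \<theta> 4 = \<theta> 5 * \<theta> 6)"
      using alg(1) RelE' by blast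
  next
    assume n12: "\<not> Rel M (\<theta> 1) (\<theta> 2)"
    have R11: "Rel M (\<theta> 1) (\<theta> 1)"
    proof -
      obtain k where k: "k \<in> JJ" "Rel M (\<theta> 1) (\<theta> k)" using L1'[of 1] by auto
      have "k \<notin> {3, 4, 5, 6}" using alg(3) RelE'[OF k(2)] by blast
      moreover have "k \<noteq> 2" using n12 k by auto
      ultimately have "k = 1" using k(1) by auto
      then show ?thesis using k by simp
    qed
    have R22: "Rel M (\<theta> 2) (\<theta> 2)"
    proof -
      obtain k where k: "k \<in> JJ" "Rel M (\<theta> 2) (\<theta> k)" using L1'[of 2] by auto
      have "k \<notin> {3, 4, 5, 6}" using alg(3) RelE'[OF k(2)] by blast
      moreover have "k \<noteq> 1" using n12 k Rel_sym by auto
      ultimately have "k = 2" using k(1) by auto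
      then show ?thesis using k by simp
    qed
    show "Rel M (\<theta> 1) (\<theta> 1)" by (rule R11)
    show "Rel M (\<theta> 2) (\<theta> 2)" by (rule R22)
    have "\<theta> 1 + \<theta> 2 = 0 \<and> \<theta> 1 ^ 2 = \<theta> 2 ^ 2 \<and> \<theta> 2 ^ 2 = \<theta> 3 * \<theta> 4 \<and> \<theta> 3 * \<theta> 4 = \<theta> 5 * \<theta> 6"
      using alg(2) RelE'[OF R11] RelE'[OF R22] by blast
    then show "\<theta> 1 + \<theta> 2 = 0" "\<theta> 1 ^ 2 = \<theta> 2 ^ 2" "\<theta> 2 ^ 2 = \<theta> 3 * \<theta> 4"
      "\<theta> 3 * \<theta> 4 = \<theta> 5 * \<theta> 6" by auto
  qed
qed

end

theorem mainTheorem13: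
  fixes F :: "'a::field poly" and \<theta> :: "nat \<Rightarrow> 'a" and M :: "nat \<Rightarrow> nat \<Rightarrow> 'a"
  assumes alg_closed: "\<And>q :: 'a poly. degree q > 0 \<Longrightarrow> \<exists>x. poly q x = 0"
    and char: "(2::'a) \<noteq> 0"
    and degF: "degree F = 6"
    and roots: "F = smult (lead_coeff F) (\<Prod>i\<in>{1..6}. [:- \<theta> i, 1:])"
    and distinct: "inj_on \<theta> {1..6}"
    and GL0: "inGL0 \<theta> M"
    and invol: "involutive_on_S \<theta> M"
    and notInv: "\<not> in_Inv \<theta> M"
  shows "(\<exists>\<sigma>. \<sigma> permutes {1..6} \<and>
            peq (mapply M (ppt \<theta> (\<sigma> 3))) (ppt \<theta> (\<sigma> 4)) \<and>
            peq (mapply M (ppt \<theta> (\<sigma> 5))) (ppt \<theta> (\<sigma> 6)))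
      \<and> ((peq (mapply M (ppt \<theta> 3)) (ppt \<theta> 4) \<and>
           peq (mapply M (ppt \<theta> 5)) (ppt \<theta> 6) \<and>
           (\<theta> 3 + \<theta> 4 = \<theta> 5 + \<theta> 6 \<or> \<theta> 3 * \<theta> 4 = \<theta> 5 * \<theta> 6))
          \<longrightarrow>
          (peq (mapply M (ppt \<theta> 1)) (ppt \<theta> 2) \<longrightarrow>
             (\<theta> 1 + \<theta> 2 = \<theta> 3 + \<theta> 4 \<and> \<theta> 3 + \<theta> 4 = \<theta> 5 + \<theta> 6) \<or>
             (\<theta> 1 * \<theta> 2 = \<theta> 3 * \<theta> 4 \<and> \<theta> 3 * \<theta> 4 = \<theta> 5 * \<theta> 6))
          \<and>
          (\<not> peq (mapply M (ppt \<theta> 1)) (ppt \<theta> 2) \<longrightarrow>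
             peq (mapply M (ppt \<theta> 1)) (ppt \<theta> 1) \<and>
             peq (mapply M (ppt \<theta> 2)) (ppt \<theta> 2) \<and>
             \<theta> 1 + \<theta> 2 = 0 \<and>
             \<theta> 1 ^ 2 = \<theta> 2 ^ 2 \<and> \<theta> 2 ^ 2 = \<theta> 3 * \<theta> 4 \<and>
             \<theta> 3 * \<theta> 4 = \<theta> 5 * \<theta> 6))"
proof -
  have p1: "\<exists>\<sigma>. \<sigma> permutes {1..6} \<and>
            peq (mapply M (ppt \<theta> (\<sigma> 3))) (ppt \<theta> (\<sigma> 4)) \<and>
            peq (mapply M (ppt \<theta> (\<sigma> 5))) (ppt \<theta> (\<sigma> 6))"
    using part1[OF distinct char GL0 invol notInv] by (simp add: Rel_peq)
  have p2: "(peq (mapply M (ppt \<theta> 3)) (ppt \<theta> 4) \<and>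
           peq (mapply M (ppt \<theta> 5)) (ppt \<theta> 6) \<and>
           (\<theta> 3 + \<theta> 4 = \<theta> 5 + \<theta> 6 \<or> \<theta> 3 * \<theta> 4 = \<theta> 5 * \<theta> 6))
          \<longrightarrow>
          (peq (mapply M (ppt \<theta> 1)) (ppt \<theta> 2) \<longrightarrow>
             (\<theta> 1 + \<theta> 2 = \<theta> 3 + \<theta> 4 \<and> \<theta> 3 + \<theta> 4 = \<theta> 5 + \<theta> 6) \<or>
             (\<theta> 1 * \<theta> 2 = \<theta> 3 * \<theta> 4 \<and> \<theta> 3 * \<theta> 4 = \<theta> 5 * \<theta> 6))
          \<and>
          (\<not> peq (mapply M (ppt \<theta> 1)) (ppt \<theta> 2) \<longrightarrow>
             peq (mapply M (ppt \<theta> 1)) (ppt \<theta> 1) \<and>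
             peq (mapply M (ppt \<theta> 2)) (ppt \<theta> 2) \<and>
             \<theta> 1 + \<theta> 2 = 0 \<and>
             \<theta> 1 ^ 2 = \<theta> 2 ^ 2 \<and> \<theta> 2 ^ 2 = \<theta> 3 * \<theta> 4 \<and>
             \<theta> 3 * \<theta> 4 = \<theta> 5 * \<theta> 6)"
  proof
    assume h: "peq (mapply M (ppt \<theta> 3)) (ppt \<theta> 4) \<and>
           peq (mapply M (ppt \<theta> 5)) (ppt \<theta> 6) \<and>
           (\<theta> 3 + \<theta> 4 = \<theta> 5 + \<theta> 6 \<or> \<theta> 3 * \<theta> 4 = \<theta> 5 * \<theta> 6)"
    then have h': "Rel M (\<theta> 3) (\<theta> 4)" "Rel M (\<theta> 5) (\<theta> 6)"
      "\<theta> 3 + \<theta> 4 = \<theta> 5 + \<theta> 6 \<or> \<theta> 3 * \<theta> 4 = \<theta> 5 * \<theta> 6"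
      by (simp_all add: Rel_peq)
    show "(peq (mapply M (ppt \<theta> 1)) (ppt \<theta> 2) \<longrightarrow>
             (\<theta> 1 + \<theta> 2 = \<theta> 3 + \<theta> 4 \<and> \<theta> 3 + \<theta> 4 = \<theta> 5 + \<theta> 6) \<or>
             (\<theta> 1 * \<theta> 2 = \<theta> 3 * \<theta> 4 \<and> \<theta> 3 * \<theta> 4 = \<theta> 5 * \<theta> 6))
          \<and>
          (\<not> peq (mapply M (ppt \<theta> 1)) (ppt \<theta> 2) \<longrightarrow>
             peq (mapply M (ppt \<theta> 1)) (ppt \<theta> 1) \<and>
             peq (mapply M (ppt \<theta> 2)) (ppt \<theta> 2) \<and>
             \<theta> 1 + \<theta> 2 = 0 \<and>
             \<theta> 1 ^ 2 = \<theta> 2 ^ 2 \<and> \<theta> 2 ^ 2 = \<theta> 3 * \<theta> 4 \<and>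
             \<theta> 3 * \<theta> 4 = \<theta> 5 * \<theta> 6)"
      using part2[OF distinct char GL0 invol h'] by (simp only: Rel_peq)
  qed
  show ?thesis using p1 p2 by (rule conjI)
qed

end
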